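(* Let $\beta\in(0,1]$ and consider the SAMBA process with learning-rate function $\alpha(p)=\frac{\beta}{1-\log p}$. Then: (a) If $q_{a^\star}(0)\le\frac12$, there exists a constant $\rho<1$ such that $\mathbb P(\sigma^{(1)}<\infty)<\rho$ and, for $k\ge2$, $\mathbb P(\sigma^{(k)}<\infty\mid\sigma^{(k-1)}<\infty)<\rho$; (b) $\displaystyle\sum_{t=0}^\infty\mathbb P\Big(q_{a^\star}(t)\ge\tfrac12\Big)<\infty$; (c) with probability $1$, $q_{a^\star}(t)\to0$ as $t\to\infty$.
   Context: Bandit model: $\mathcal A$ finite set of arms, $N=|\mathcal A|$; $R_a(t)\in\{0,1\}$ independent Bernoulli with mean $r_a$ for $a\in\mathcal A$, $t\in\mathbb Z_+$; unique optimal arm $a^\star$ with $r^\star:=r_{a^\star}>r_a$ for $a\ne a^\star$; $\Delta:=r^\star-\max_{a\ne a^\star}r_a>0$. SAMBA process with learning-rate function $\alpha$: $\mathbf p(0)$ a probability vector with positive entries; at time $t$, $a_\star(t)$ is an arm maximizing $p_a(t)$ (ties broken uniformly at random), $p_\star(t)=p_{a_\star(t)}(t)$; one arm is played, arm $a$ with conditional probability $p_a(t)$ given the past; $I_a(t)$ indicates that $a$ is played, $I_\star(t)=I_{a_\star(t)}(t)$, $R_\star(t)=R_{a_\star(t)}(t)$. For $a\ne a_\star(t)$: $p_a(t+1)=p_a(t)+\alpha(p_a(t))p_a(t)^2\big[\frac{I_a(t)R_a(t)}{p_a(t)}-\frac{I_\star(t)R_\star(t)}{p_\star(t)}\big]$,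 and $p_{a_\star(t)}(t+1)=1-\sum_{a\ne a_\star(t)}p_a(t+1)$. Let $q_{a^\star}(t)=1-p_{a^\star}(t)$. Stopping times: $\tau^{(0)}=\sigma^{(0)}=0$ and for $k\ge1$, $\tau^{(k)}=\min\{t\ge\sigma^{(k-1)}:q_{a^\star}(t)<\frac12\}$, $\sigma^{(k)}=\min\{t\ge\tau^{(k)}:q_{a^\star}(t)\ge\frac12\}$, where a minimum over an empty set (or following an infinite time) is $\infty$. *)

theory Defs
  imports "HOL-Probability.Probability"
begin

text \<open>Arms form a finite linearly ordered
type 'a (the order is only used to turn uniform random numbers into the required
discrete choices).  At each time t the randomness is a triple (u, v, R) with u, v
independent uniform on [0,1] and R :: 'a => bool a vector of independent Bernoulli
rewards R_a(t) with means r a; the triples are i.i.d. over t.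
u selects the played arm (arm a with probability p_a(t)), v breaks ties among the
maximisers of p(t) uniformly at random.\<close>

definition noise :: "('a::{finite,linorder} \<Rightarrow> real) \<Rightarrow> (real \<times> real \<times> ('a \<Rightarrow> bool)) measure" where
  "noise r = uniform_measure lborel {0..1} \<Otimes>\<^sub>M uniform_measure lborel {0..1}
              \<Otimes>\<^sub>M measure_pmf (Pi_pmf UNIV False (\<lambda>a. bernoulli_pmf (r a)))"

definition noise_seq :: "('a::{finite,linorder} \<Rightarrow> real) \<Rightarrow> (nat \<Rightarrow> real \<times> real \<times> ('a \<Rightarrow> bool)) measure" where
  "noise_seq r = PiM UNIV (\<lambda>_. noise r)"

definition argmax_set :: "('a::{finite,linorder} \<Rightarrow> real) \<Rightarrow> 'a set" where
  "argmax_set p = {a. \<forall>b. p b \<le> p a}"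

text \<open>Uniform tie-breaking: v uniform on [0,1] picks an element of the sorted maximiser list.\<close>
definition leader :: "('a::{finite,linorder} \<Rightarrow> real) \<Rightarrow> real \<Rightarrow> 'a" where
  "leader p v = (let L = sorted_list_of_set (argmax_set p)
                 in L ! min (nat \<lfloor>v * real (length L)\<rfloor>) (length L - 1))"

text \<open>Played arm: u uniform on [0,1] selects arm a with probability p a (inverse CDF).\<close>
definition played :: "('a::{finite,linorder} \<Rightarrow> real) \<Rightarrow> real \<Rightarrow> 'a" where
  "played p u = (if \<exists>a. u < (\<Sum>b\<in>{..a}. p b) then (LEAST a. u < (\<Sum>b\<in>{..a}. p b)) else Max UNIV)"

definition samba_step :: "(real \<Rightarrow> real) \<Rightarrow> ('a::{finite,linorder} \<Rightarrow> real) \<Rightarrow> 'a \<Rightarrow> 'a \<Rightarrow> ('a \<Rightarrow> bool) \<Rightarrow> ('a \<Rightarrow> real)" where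
  "samba_step \<alpha> p s b R =
     (let new = (\<lambda>a. p a + \<alpha> (p a) * (p a)\<^sup>2 *
                     ((if b = a \<and> R a then 1 else 0) / p a - (if b = s \<and> R s then 1 else 0) / p s))
      in (\<lambda>a. if a = s then 1 - (\<Sum>c\<in>UNIV - {s}. new c) else new a))"

primrec samba :: "(real \<Rightarrow> real) \<Rightarrow> ('a::{finite,linorder} \<Rightarrow> real) \<Rightarrow> (nat \<Rightarrow> real \<times> real \<times> ('a \<Rightarrow> bool)) \<Rightarrow> nat \<Rightarrow> 'a \<Rightarrow> real" where
  "samba \<alpha> p0 \<omega> 0 = p0"
| "samba \<alpha> p0 \<omega> (Suc t) =
     (let p = samba \<alpha> p0 \<omega> t; (u, v, R) = \<omega> t
      in samba_step \<alpha> p (leader p v) (played p u) R)"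

definition hit :: "(nat \<Rightarrow> bool) \<Rightarrow> enat \<Rightarrow> enat" where
  "hit P s = (case s of \<infinity> \<Rightarrow> \<infinity>
                | enat n \<Rightarrow> (if \<exists>t\<ge>n. P t then enat (LEAST t. n \<le> t \<and> P t) else \<infinity>))"

primrec tau_sigma :: "(nat \<Rightarrow> real) \<Rightarrow> nat \<Rightarrow> enat \<times> enat" where
  "tau_sigma q 0 = (0, 0)"
| "tau_sigma q (Suc k) =
     (let \<tau> = hit (\<lambda>t. q t < 1/2) (snd (tau_sigma q k)) in (\<tau>, hit (\<lambda>t. q t \<ge> 1/2) \<tau>))"

definition sigma_k :: "(nat \<Rightarrow> real) \<Rightarrow> nat \<Rightarrow> enat" where
  "sigma_k q k = snd (tau_sigma q k)"

end

theory Submission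
  imports Defs
begin


definition pvec :: "('a::finite \<Rightarrow> real) \<Rightarrow> bool" where
  "pvec p \<longleftrightarrow> (\<forall>a. 0 < p a) \<and> sum p UNIV = 1"

definition jump :: "(real \<Rightarrow> real) \<Rightarrow> ('a::{finite,linorder} \<Rightarrow> real) \<Rightarrow> 'a \<Rightarrow> 'a \<Rightarrow> 'a \<Rightarrow> real" where
  "jump \<alpha> p s b = (if b = s
     then (\<lambda>a. if a = s then p s + (\<Sum>c\<in>UNIV-{s}. \<alpha> (p c) * (p c)\<^sup>2 / p s) else p a - \<alpha> (p a) * (p a)\<^sup>2 / p s)
     else (\<lambda>a. if a = s then p s - \<alpha> (p b) * p b else if a = b then p b + \<alpha> (p b) * p b else p a))"

lemma sum_minus_one: "sum p (UNIV - {s}) = sum p UNIV - (p (s::'a::finite)::real)"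
  by (simp add: sum_diff1)

lemma step_eq:
  assumes "sum p UNIV = 1" "\<And>a. p a \<noteq> 0"
  shows "samba_step \<alpha> p s b R = (if R b then jump \<alpha> p s b else p)"
proof -
  define M where "M = (\<lambda>a. p a + \<alpha> (p a) * (p a)\<^sup>2 *
                     ((if b = a \<and> R a then 1 else 0) / p a - (if b = s \<and> R s then 1 else 0) / p s))"
  have e: "samba_step \<alpha> p s b R = (\<lambda>a. if a = s then 1 - sum M (UNIV-{s}) else M a)"
    unfolding samba_step_def Let_def M_def by simp
  show ?thesis
  proof (cases "R b")
    case False
    have "M = p" using False unfolding M_def by (auto intro!: ext)
    then show ?thesis using False assms(1) e
      by (auto simp: sum_minus_one intro!: ext)
  next
    case True
    show ?thesis
    proof (cases "b = s")
      case bs: True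
      have MN: "M = (\<lambda>a. if a = s then M s else p a - \<alpha> (p a) * (p a)\<^sup>2 / p s)"
        using True bs unfolding M_def by (auto intro!: ext)
      have "sum M (UNIV - {s}) = (\<Sum>c\<in>UNIV - {s}. p c - \<alpha> (p c) * (p c)\<^sup>2 / p s)"
        by (subst MN) (rule sum.cong, auto)
      also have "\<dots> = sum p UNIV - p s - (\<Sum>c\<in>UNIV - {s}. \<alpha> (p c) * (p c)\<^sup>2 / p s)"
        by (simp add: sum_subtractf sum_minus_one)
      finally have "sum M (UNIV - {s}) = sum p UNIV - p s - (\<Sum>c\<in>UNIV - {s}. \<alpha> (p c) * (p c)\<^sup>2 / p s)" .
      then have sM: "sum M (UNIV - {s}) = 1 - p s - (\<Sum>c\<in>UNIV - {s}. \<alpha> (p c) * (p c)\<^sup>2 / p s)"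
        using assms(1) by simp
      have sM2: "(\<Sum>c\<in>UNIV - {s}. p c - \<alpha> (p c) * (p c)\<^sup>2 / p s) = 1 - p s - (\<Sum>c\<in>UNIV - {s}. \<alpha> (p c) * (p c)\<^sup>2 / p s)"
        using assms(1) by (simp add: sum_subtractf sum_minus_one)
      have Ma: "\<And>a. a \<noteq> s \<Longrightarrow> M a = p a - \<alpha> (p a) * (p a)\<^sup>2 / p s"
        using True bs unfolding M_def by auto
      have "samba_step \<alpha> p s b R = jump \<alpha> p s b"
      proof (rule ext)
        fix a show "samba_step \<alpha> p s b R a = jump \<alpha> p s b a"
          unfolding e jump_def using bs by (cases "a = s") (simp_all add: Ma sM sM2)
      qed
      then show ?thesis using True by simp
    next
      case bs: False
      have MN: "M = (\<lambda>a. if a = b then p b + \<alpha> (p b) * p b else p a)"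
        using True bs assms(2) unfolding M_def by (auto intro!: ext simp: power2_eq_square)
      have "sum M (UNIV - {s}) = (\<Sum>c\<in>UNIV - {s}. p c + (if c = b then \<alpha> (p b) * p b else 0))"
        by (subst MN) (rule sum.cong, auto)
      also have "\<dots> = sum p UNIV - p s + \<alpha> (p b) * p b"
        using bs by (simp add: sum.distrib sum_minus_one)
      finally have "sum M (UNIV - {s}) = sum p UNIV - p s + \<alpha> (p b) * p b" .
      then have sM: "sum M (UNIV - {s}) = 1 - p s + \<alpha> (p b) * p b"
        using assms(1) by simp
      then have sM3: "(\<Sum>x\<in>UNIV - {s}. if x = b then p b + \<alpha> (p b) * p b else p x) = 1 - p s + \<alpha> (p b) * p b"
        using MN by simp
      have "samba_step \<alpha> p s b R = jump \<alpha> p s b"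
      proof (rule ext)
        fix a show "samba_step \<alpha> p s b R a = jump \<alpha> p s b a"
          unfolding e jump_def using bs by (cases "a = s") (simp_all add: MN sM sM3)
      qed
      then show ?thesis using True by simp
    qed
  qed
qed

lemma sum_samba_step: "sum (samba_step \<alpha> p s b R) UNIV = 1"
proof -
  have "UNIV = insert s (UNIV - {s})" by auto
  then have "sum (samba_step \<alpha> p s b R) UNIV = samba_step \<alpha> p s b R s + sum (samba_step \<alpha> p s b R) (UNIV - {s})"
    by (metis Diff_iff finite sum.insert singletonI)
  also have "sum (samba_step \<alpha> p s b R) (UNIV - {s}) = (\<Sum>c\<in>UNIV - {s}. p c + \<alpha> (p c) * (p c)\<^sup>2 *
                     ((if b = c \<and> R c then 1 else 0) / p c - (if b = s \<and> R s then 1 else 0) / p s))"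
    by (rule sum.cong) (auto simp: samba_step_def Let_def)
  finally show ?thesis by (simp add: samba_step_def Let_def)
qed

lemma argmax_nonempty: "argmax_set (p::'a::{finite,linorder} \<Rightarrow> real) \<noteq> {}"
proof -
  obtain a where "p a = Max (range p)"
    by (metis (mono_tags, lifting) Max_in UNIV_not_empty finite finite_imageI image_iff image_is_empty)
  then have "a \<in> argmax_set p" by (auto simp: argmax_set_def)
  then show ?thesis by auto
qed

lemma leader_in: "leader p v \<in> argmax_set p"
proof -
  let ?L = "sorted_list_of_set (argmax_set p)"
  have "set ?L = argmax_set p" by simp
  moreover have "length ?L > 0" using argmax_nonempty[of p]
    by (metis length_greater_0_conv set_empty2 calculation)
  ultimately show ?thesis unfolding leader_def Let_def
    by (metis diff_less le_add_diff_inverse less_one min.cobounded2 nth_mem order_le_less_trans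
        length_greater_0_conv add_gr_0 less_numeral_extra(1))
qed


definition al :: "real \<Rightarrow> real \<Rightarrow> real" where
  "al \<beta> p = \<beta> / (1 - ln p)"

lemma one_minus_ln_pos: "0 < p \<Longrightarrow> p \<le> 1 \<Longrightarrow> 1 \<le> 1 - ln (p::real)"
  using ln_le_zero_iff[of p] by simp

lemma al_nonneg: assumes "0 \<le> \<beta>" "0 < p" "p \<le> 1" shows "0 \<le> al \<beta> p"
proof -
  have "1 \<le> 1 - ln p" using assms one_minus_ln_pos by blast
  then have "0 < 1 - ln p" by linarith
  then show ?thesis unfolding al_def using assms by (intro divide_nonneg_pos)
qed

lemma al_pos: assumes "0 < \<beta>" "0 < p" "p \<le> 1" shows "0 < al \<beta> p"
proof -
  have "1 \<le> 1 - ln p" using assms one_minus_ln_pos by blast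
  then have "0 < 1 - ln p" by linarith
  then show ?thesis unfolding al_def using assms by (intro divide_pos_pos)
qed

lemma al_le_beta: assumes "0 \<le> \<beta>" "0 < p" "p \<le> 1" shows "al \<beta> p \<le> \<beta>"
proof -
  have "1 \<le> 1 - ln p" using assms one_minus_ln_pos by blast
  then have "\<beta> / (1 - ln p) \<le> \<beta> / 1" using assms by (intro divide_left_mono mult_pos_pos; linarith)
  then show ?thesis by (simp add: al_def)
qed

lemma al_mono: assumes "0 \<le> \<beta>" "0 < x" "x \<le> y" "y \<le> 1" shows "al \<beta> x \<le> al \<beta> y"
proof -
  have "1 \<le> 1 - ln x" using assms one_minus_ln_pos by auto
  moreover have "1 \<le> 1 - ln y" using assms one_minus_ln_pos by auto
  moreover have "ln x \<le> ln y" using assms by simp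
  ultimately show ?thesis unfolding al_def using assms
    by (intro divide_left_mono mult_pos_pos; linarith)
qed

lemma al_le_23: assumes "0 \<le> \<beta>" "\<beta> \<le> 1" "0 < p" "p \<le> 1/2" shows "al \<beta> p \<le> 2/3"
proof -
  have "ln p \<le> ln (1/2)" using assms by simp
  also have "\<dots> \<le> 1/2 - 1" by (rule ln_le_minus_one) simp
  finally have "3/2 \<le> 1 - ln p" by simp
  then have "\<beta> / (1 - ln p) \<le> 1 / (3/2)" using assms
    by (intro frac_le) auto
  then show ?thesis by (simp add: al_def)
qed

lemma al_over_p: assumes "0 \<le> \<beta>" "0 < p" "p \<le> 1" shows "\<beta> \<le> al \<beta> p / p"
proof -
  have "ln (1/p) \<le> 1/p - 1" by (rule ln_le_minus_one) (use assms in simp)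
  then have "p * (1 - ln p) \<le> 1" using assms by (simp add: ln_div field_simps)
  moreover have "1 \<le> 1 - ln p" using assms one_minus_ln_pos by blast
  then have "0 < p * (1 - ln p)" using assms by (intro mult_pos_pos; linarith)
  ultimately have "\<beta> \<le> \<beta> / (p * (1 - ln p))" using assms
    by (simp add: le_divide_eq mult_left_le)
  then show ?thesis by (simp add: al_def mult.commute)
qed

lemma al_small: assumes "0 \<le> \<beta>" "\<beta> \<le> 1" "0 < D" "0 < p" "p \<le> exp (1 - 11 / D)"
  shows "al \<beta> p \<le> D / 11"
proof -
  have "ln p \<le> 1 - 11 / D" using assms by (metis ln_exp ln_le_cancel_iff exp_gt_zero)
  then have "11 / D \<le> 1 - ln p" by simp
  moreover have "0 < 11 / D" using assms by simp
  ultimately have "\<beta> / (1 - ln p) \<le> 1 / (11 / D)" using assms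
    by (intro frac_le) auto
  then show ?thesis by (simp add: al_def mult.commute)
qed

lemma pvec_le_sum: "pvec p \<Longrightarrow> a \<noteq> s \<Longrightarrow> p a + p s \<le> 1"
proof -
  assume "pvec p" "a \<noteq> s"
  then have "sum p {a, s} \<le> sum p UNIV"
    by (intro sum_mono2) (auto simp: pvec_def less_imp_le)
  then show ?thesis using \<open>pvec p\<close> \<open>a \<noteq> s\<close> by (simp add: pvec_def)
qed

lemma pvec_le1: "pvec p \<Longrightarrow> p a \<le> 1"
proof -
  assume "pvec p"
  then have "sum p {a} \<le> sum p UNIV"
    by (intro sum_mono2) (auto simp: pvec_def less_imp_le)
  then show ?thesis using \<open>pvec p\<close> by (simp add: pvec_def)
qed

lemma argmax_le: "s \<in> argmax_set p \<Longrightarrow> p a \<le> p s"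
  by (simp add: argmax_set_def)

lemma nonleader_half: "pvec p \<Longrightarrow> s \<in> argmax_set p \<Longrightarrow> a \<noteq> s \<Longrightarrow> p a \<le> 1/2"
  using pvec_le_sum[of p a s] argmax_le[of s p a] by simp

lemma jump_lb:
  assumes "pvec p" "s \<in> argmax_set p" "0 \<le> \<beta>" "\<beta> \<le> 1"
  shows "p a / 3 \<le> jump (al \<beta>) p s b a"
proof -
  have pos: "\<And>c. 0 < p c" using assms by (simp add: pvec_def)
  have alb: "\<And>c. c \<noteq> s \<Longrightarrow> al \<beta> (p c) \<le> 2/3"
    using al_le_23 nonleader_half assms pos by blast
  have aln: "\<And>c. 0 \<le> al \<beta> (p c)" using al_nonneg assms pos pvec_le1 by blast
  show ?thesis
  proof (cases "b = s")
    case True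
    show ?thesis
    proof (cases "a = s")
      case True
      have "0 \<le> (\<Sum>c\<in>UNIV-{s}. al \<beta> (p c) * (p c)\<^sup>2 / p s)"
        using aln pos by (intro sum_nonneg divide_nonneg_pos mult_nonneg_nonneg) auto
      then show ?thesis using \<open>b = s\<close> True pos[of s] by (simp add: jump_def)
    next
      case False
      have r: "p a / p s \<le> 1" using argmax_le[OF assms(2)] pos by simp
      have "al \<beta> (p a) * (p a)\<^sup>2 / p s = al \<beta> (p a) * p a * (p a / p s)"
        by (simp add: power2_eq_square)
      also have "\<dots> \<le> (2/3) * p a * 1"
        using alb[OF False] aln[of a] pos[of a] r pos[of s]
        by (intro mult_mono) auto
      finally show ?thesis using \<open>b = s\<close> False by (simp add: jump_def)
    qed
  next
    case False
    show ?thesis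
    proof (cases "a = s")
      case True
      have "al \<beta> (p b) * p b \<le> (2/3) * p s"
        using alb[OF False] aln[of b] pos[of b] argmax_le[OF assms(2), of b]
        by (intro mult_mono) auto
      then show ?thesis using False True by (simp add: jump_def)
    next
      case a: False
      then show ?thesis using False aln[of b] pos[of b] pos[of a]
        by (auto simp: jump_def)
    qed
  qed
qed

lemma pvec_nz: "pvec p \<Longrightarrow> p a \<noteq> 0"
  unfolding pvec_def by (metis less_irrefl)

lemma pvec_sum: "pvec p \<Longrightarrow> sum p UNIV = 1"
  unfolding pvec_def by simp

lemma pvec_pos: "pvec p \<Longrightarrow> 0 < p a"
  unfolding pvec_def by simp

lemma step_eq_pvec: assumes "pvec p" shows "samba_step \<alpha> p s b R = (if R b then jump \<alpha> p s b else p)"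
  by (rule step_eq) (auto simp: pvec_nz[OF assms] pvec_sum[OF assms])

lemma jump_as_step: "pvec p \<Longrightarrow> jump \<alpha> p s b = samba_step \<alpha> p s b (\<lambda>_. True)"
  by (simp add: step_eq_pvec)

lemma pvec_jump:
  assumes "pvec p" "s \<in> argmax_set p" "0 \<le> \<beta>" "\<beta> \<le> 1"
  shows "pvec (jump (al \<beta>) p s b)"
proof -
  have "\<And>a. 0 < jump (al \<beta>) p s b a"
    using jump_lb[OF assms] pvec_pos[OF assms(1)] by (metis divide_pos_pos order_less_le_trans zero_less_numeral)
  moreover have "sum (jump (al \<beta>) p s b) UNIV = 1"
    using jump_as_step[OF assms(1)] sum_samba_step by metis
  ultimately show ?thesis by (simp add: pvec_def)
qed

definition Fs :: "real \<Rightarrow> ('a::{finite,linorder} \<Rightarrow> real) \<Rightarrow> real \<times> real \<times> ('a \<Rightarrow> bool) \<Rightarrow> 'a \<Rightarrow> real" where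
  "Fs \<beta> p x = (case x of (u, v, R) \<Rightarrow> samba_step (al \<beta>) p (leader p v) (played p u) R)"

lemma Fs_eq: "pvec p \<Longrightarrow> Fs \<beta> p (u, v, R) = (if R (played p u) then jump (al \<beta>) p (leader p v) (played p u) else p)"
  unfolding Fs_def by (simp add: step_eq_pvec)

lemma Fs_cases: "pvec p \<Longrightarrow> Fs \<beta> p x = p \<or> Fs \<beta> p x = jump (al \<beta>) p (leader p (fst (snd x))) (played p (fst x))"
  by (cases x) (auto simp: Fs_eq)

lemma pvec_Fs: "pvec p \<Longrightarrow> 0 \<le> \<beta> \<Longrightarrow> \<beta> \<le> 1 \<Longrightarrow> pvec (Fs \<beta> p x)"
  using Fs_cases[of p \<beta> x] pvec_jump[OF _ leader_in] by metis

lemma Fs_lb: assumes "pvec p" "0 \<le> \<beta>" "\<beta> \<le> 1" shows "p a / 3 \<le> Fs \<beta> p x a"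
proof (cases "Fs \<beta> p x = p")
  case True
  then show ?thesis using pvec_pos[OF assms(1), of a] by simp
next
  case False
  then have "Fs \<beta> p x = jump (al \<beta>) p (leader p (fst (snd x))) (played p (fst x))"
    using Fs_cases[OF assms(1)] by blast
  then show ?thesis using jump_lb[OF assms(1) leader_in assms(2,3)] by simp
qed

lemma samba_Suc: "samba (al \<beta>) p \<omega> (Suc t) = Fs \<beta> (samba (al \<beta>) p \<omega> t) (\<omega> t)"
  by (simp add: Fs_def Let_def split: prod.split)

lemma samba_shift: "samba (al \<beta>) p (case_nat x \<omega>) (Suc t) = samba (al \<beta>) (Fs \<beta> p x) \<omega> t"
  by (induction t) (simp_all add: samba_Suc del: samba.simps(2))

lemma pvec_samba: "pvec p \<Longrightarrow> 0 \<le> \<beta> \<Longrightarrow> \<beta> \<le> 1 \<Longrightarrow> pvec (samba (al \<beta>) p \<omega> t)"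
  by (induction t) (simp_all add: samba_Suc pvec_Fs del: samba.simps(2))


lemma inv_sq_plus: assumes "0 \<le> (a::real)" shows "1 / (1 + a)\<^sup>2 \<le> 1 - 2*a + 3*a\<^sup>2"
proof -
  have "(1 - 2*a + 3*a\<^sup>2) * (1 + a)\<^sup>2 = 1 + 4*a^3 + 3*a^4"
    by (simp add: power2_eq_square power3_eq_cube power4_eq_xxxx algebra_simps)
  also have "\<dots> \<ge> 1" using assms by simp
  finally have "1 \<le> (1 - 2*a + 3*a\<^sup>2) * (1 + a)\<^sup>2" .
  moreover have "0 < (1 + a)\<^sup>2" using assms by simp
  ultimately show ?thesis by (simp add: divide_le_eq)
qed

lemma inv_sq_minus: assumes "0 \<le> (x::real)" "x \<le> 1/4" shows "1 / (1 - x)\<^sup>2 \<le> 1 + 2*x + 8*x\<^sup>2"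
proof -
  have "(1 + 2*x + 8*x\<^sup>2) * (1 - x)\<^sup>2 = 1 + x\<^sup>2 * (5 - 14*x + 8*x\<^sup>2)"
    by (simp add: power2_eq_square power3_eq_cube power4_eq_xxxx algebra_simps)
  also have "0 \<le> 8*x\<^sup>2" by simp
  then have "5 - 14*x + 8*x\<^sup>2 \<ge> 0" using assms by linarith
  then have "1 + x\<^sup>2 * (5 - 14*x + 8*x\<^sup>2) \<ge> 1" by simp
  finally have "1 \<le> (1 + 2*x + 8*x\<^sup>2) * (1 - x)\<^sup>2" .
  moreover have "0 < (1 - x)\<^sup>2" using assms by simp
  ultimately show ?thesis by (simp add: divide_le_eq)
qed

lemma core_ineq:
  fixes p ps a r1 r2 D :: real
  assumes p: "0 < p" "p \<le> ps" and a: "0 \<le> a" "a \<le> D / 11" and D: "0 < D" "D \<le> 1"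
    and r: "0 \<le> r1" "r1 \<le> 1" "0 \<le> r2" "r2 \<le> 1" "r2 + D \<le> r1"
  shows "p * r1 * (1 / (p + a * p)\<^sup>2 - 1 / p\<^sup>2) + ps * r2 * (1 / (p - a * p\<^sup>2 / ps)\<^sup>2 - 1 / p\<^sup>2)
         \<le> - (D * a / p)"
proof -
  have ps: "0 < ps" using p by simp
  define x where "x = a * (p / ps)"
  have t: "0 < p / ps" "p / ps \<le> 1" using p ps by auto
  have x: "0 \<le> x" "x \<le> a" unfolding x_def
    using mult_nonneg_nonneg[OF a(1) less_imp_le[OF t(1)]] mult_left_le[OF t(2) a(1)] by auto
  have x4: "x \<le> 1/4" using x a D by simp
  have e1: "1 / (p + a * p)\<^sup>2 - 1 / p\<^sup>2 = (1 / (1 + a)\<^sup>2 - 1) / p\<^sup>2"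
  proof -
    have "p + a * p = p * (1 + a)" by (simp add: algebra_simps)
    then have "1 / (p + a * p)\<^sup>2 = (1 / (1 + a)\<^sup>2) / p\<^sup>2" by (simp add: power_mult_distrib mult.commute)
    then show ?thesis by (simp add: diff_divide_distrib)
  qed
  have e2: "1 / (p - a * p\<^sup>2 / ps)\<^sup>2 - 1 / p\<^sup>2 = (1 / (1 - x)\<^sup>2 - 1) / p\<^sup>2"
  proof -
    have "p - a * p\<^sup>2 / ps = p * (1 - x)" unfolding x_def using ps by (simp add: field_simps power2_eq_square)
    then have "1 / (p - a * p\<^sup>2 / ps)\<^sup>2 = (1 / (1 - x)\<^sup>2) / p\<^sup>2" by (simp add: power_mult_distrib mult.commute)
    then show ?thesis by (simp add: diff_divide_distrib)
  qed
  have b1: "p * r1 * ((1 / (1 + a)\<^sup>2 - 1) / p\<^sup>2) \<le> r1 * (a / p) * (-2 + 3*a)"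
  proof -
    have "(1 / (1 + a)\<^sup>2 - 1) \<le> a * (-2 + 3*a)" using inv_sq_plus[OF a(1)] by (simp add: algebra_simps power2_eq_square)
    then have "p * r1 * ((1 / (1 + a)\<^sup>2 - 1) / p\<^sup>2) \<le> p * r1 * (a * (-2 + 3*a) / p\<^sup>2)"
      using p r by (intro mult_left_mono divide_right_mono) auto
    also have "\<dots> = r1 * (a / p) * (-2 + 3*a)" using p by (simp add: field_simps power2_eq_square)
    finally show ?thesis .
  qed
  have b2: "ps * r2 * ((1 / (1 - x)\<^sup>2 - 1) / p\<^sup>2) \<le> r2 * (a / p) * (2 + 8*a)"
  proof -
    have "(1 / (1 - x)\<^sup>2 - 1) \<le> x * (2 + 8*x)" using inv_sq_minus[OF x(1) x4] by (simp add: algebra_simps power2_eq_square)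
    also have "\<dots> \<le> x * (2 + 8*a)" using x by (intro mult_left_mono) auto
    finally have "ps * r2 * ((1 / (1 - x)\<^sup>2 - 1) / p\<^sup>2) \<le> ps * r2 * (x * (2 + 8*a) / p\<^sup>2)"
      using ps r by (intro mult_left_mono divide_right_mono) auto
    also have "\<dots> = r2 * (a / p) * (2 + 8*a)" unfolding x_def using p ps by (simp add: field_simps power2_eq_square)
    finally show ?thesis .
  qed
  have "r1 * (a / p) * (-2 + 3*a) + r2 * (a / p) * (2 + 8*a) = (a / p) * (-2 * (r1 - r2) + a * (3 * r1 + 8 * r2))"
    by (simp add: algebra_simps)
  also have "\<dots> \<le> (a / p) * (-2 * D + a * 11)"
  proof (rule mult_left_mono)
    have "a * (3 * r1 + 8 * r2) \<le> a * 11" using a r by (intro mult_left_mono) auto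
    moreover have "-2 * (r1 - r2) \<le> -2 * D" using r by simp
    ultimately show "-2 * (r1 - r2) + a * (3 * r1 + 8 * r2) \<le> -2 * D + a * 11" by (rule add_mono[rotated])
  qed (use a p in auto)
  also have "\<dots> \<le> (a / p) * (- D)"
    using a p by (intro mult_left_mono) auto
  finally have "r1 * (a / p) * (-2 + 3*a) + r2 * (a / p) * (2 + 8*a) \<le> - (D * a / p)" by (simp add: mult.commute)
  then show ?thesis unfolding e1 e2 using b1 b2 by linarith
qed


lemma sum_UNIV_remove: "sum f (UNIV::'a::finite set) = f x + sum f (UNIV - {x})"
  by (simp add: sum.remove)

lemma pvec_max_ge: fixes p :: "'a::{finite,linorder} \<Rightarrow> real"
  assumes "pvec p" "s \<in> argmax_set p" shows "1 / real CARD('a) \<le> p s"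
proof -
  have "1 = sum p UNIV" using pvec_sum[OF assms(1)] by simp
  also have "\<dots> \<le> sum (\<lambda>_. p s) (UNIV::'a set)" by (rule sum_mono) (use argmax_le[OF assms(2)] in auto)
  also have "\<dots> = real CARD('a) * p s" by simp
  finally show ?thesis by (simp add: divide_le_eq mult.commute)
qed

lemma exists_big: assumes "pvec p" "0 < e" "e \<le> 1 - p (x::'a::{finite,linorder})"
  shows "\<exists>a. a \<noteq> x \<and> e / real CARD('a) \<le> p a"
proof (rule ccontr)
  assume "\<not> ?thesis"
  then have lt: "\<And>a. a \<noteq> x \<Longrightarrow> p a < e / real CARD('a)" by force
  have ne: "UNIV - {x} \<noteq> {}"
  proof
    assume "UNIV - {x} = {}"
    then have "sum p (UNIV - {x}) = 0" by (metis sum.empty)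
    then show False using sum_minus_one[of p x] pvec_sum[OF assms(1)] assms by simp
  qed
  have "sum p (UNIV - {x}) < sum (\<lambda>_. e / real CARD('a)) (UNIV - {x})"
    by (rule sum_strict_mono) (use lt ne in auto)
  also have "\<dots> = real (card (UNIV - {x})) * (e / real CARD('a))" by simp
  also have "\<dots> \<le> real CARD('a) * (e / real CARD('a))"
    using assms(2) by (intro mult_right_mono) (auto simp: card_Diff_subset)
  also have "\<dots> = e" by simp
  finally show False using sum_minus_one[of p x] pvec_sum[OF assms(1)] assms by simp
qed

locale sl =
  fixes r :: "'a::{finite,linorder} \<Rightarrow> real" and astar :: 'a and \<beta> D :: real
  assumes r0: "\<And>a. 0 \<le> r a" and r1: "\<And>a. r a \<le> 1"
    and gap: "\<And>a. a \<noteq> astar \<Longrightarrow> r a + D \<le> r astar"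
    and D: "0 < D" "D \<le> 1" and beta: "0 < \<beta>" "\<beta> \<le> 1"
begin

abbreviation "J p s b \<equiv> jump (al \<beta>) p s b"

definition Ex :: "(('a \<Rightarrow> real) \<Rightarrow> real) \<Rightarrow> ('a \<Rightarrow> real) \<Rightarrow> 'a \<Rightarrow> real" where
  "Ex G p s = (\<Sum>b\<in>UNIV. p b * (r b * G (J p s b) + (1 - r b) * G p))"

lemma Ex_alt: assumes "pvec p" shows "Ex G p s = G p + (\<Sum>b\<in>UNIV. p b * r b * (G (J p s b) - G p))"
proof -
  have "Ex G p s = (\<Sum>b\<in>UNIV. p b * G p + p b * r b * (G (J p s b) - G p))"
    unfolding Ex_def by (rule sum.cong) (auto simp: algebra_simps)
  also have "\<dots> = sum p UNIV * G p + (\<Sum>b\<in>UNIV. p b * r b * (G (J p s b) - G p))"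
    by (simp add: sum.distrib sum_distrib_right)
  finally show ?thesis using pvec_sum[OF assms] by simp
qed

lemma Ex_mono: assumes "pvec p" "\<And>p'. G p' \<le> H p'" shows "Ex G p s \<le> Ex H p s"
  unfolding Ex_def using pvec_pos[OF assms(1)] r0 r1 assms(2)
  by (intro sum_mono mult_left_mono add_mono) (auto intro: less_imp_le)

definition W :: "('a \<Rightarrow> real) \<Rightarrow> real" where
  "W p = (\<Sum>c\<in>UNIV-{astar}. al \<beta> (p c) * (p c)\<^sup>2)"

lemma al_p: "pvec p \<Longrightarrow> 0 \<le> al \<beta> (p c)"
  using al_nonneg beta pvec_pos pvec_le1 by (metis less_imp_le)

lemma W_nonneg: "pvec p \<Longrightarrow> 0 \<le> W p"
  unfolding W_def using al_p by (intro sum_nonneg mult_nonneg_nonneg) auto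

definition gg :: "real \<Rightarrow> real" where
  "gg e = al \<beta> (e / real CARD('a)) * (e / real CARD('a))\<^sup>2"

lemma gg_pos: "0 < e \<Longrightarrow> e \<le> 1 \<Longrightarrow> 0 < gg e"
proof -
  assume e: "0 < e" "e \<le> 1"
  have c: "1 \<le> real CARD('a)" by (simp add: Suc_leI)
  have "e \<le> real CARD('a)" using e c by linarith
  then have "e / real CARD('a) \<le> 1" by (simp add: divide_le_eq)
  then have "0 < al \<beta> (e / real CARD('a))" using e by (intro al_pos beta) auto
  then show ?thesis unfolding gg_def using e by simp
qed

lemma W_lb: assumes "pvec p" "0 < e" "e \<le> 1 - p astar" shows "gg e \<le> W p"
proof -
  obtain a where a: "a \<noteq> astar" "e / real CARD('a) \<le> p a" using exists_big[OF assms] by blast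
  have c: "0 < real CARD('a)" by simp
  have "gg e \<le> al \<beta> (p a) * (p a)\<^sup>2" unfolding gg_def
    using a c assms pvec_le1[OF assms(1), of a] pvec_pos[OF assms(1), of a] beta
    by (intro mult_mono al_mono power_mono) (auto intro!: al_nonneg)
  also have "\<dots> = (\<Sum>c\<in>{a}. al \<beta> (p c) * (p c)\<^sup>2)" by simp
  also have "\<dots> \<le> W p" unfolding W_def using a al_p[OF assms(1)]
    by (intro sum_mono2) auto
  finally show ?thesis .
qed

lemma J_leader_self: "J p astar astar astar = p astar + W p / p astar"
  unfolding jump_def W_def by (simp add: sum_divide_distrib)

lemma J_leader_other: "b \<noteq> astar \<Longrightarrow> J p astar b astar = p astar - al \<beta> (p b) * p b"
  unfolding jump_def by simp

lemma J_nonleader_s: "s \<noteq> astar \<Longrightarrow> J p s s astar = p astar - al \<beta> (p astar) * (p astar)\<^sup>2 / p s"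
  unfolding jump_def by simp

lemma J_nonleader_astar: "s \<noteq> astar \<Longrightarrow> J p s astar astar = p astar + al \<beta> (p astar) * p astar"
  unfolding jump_def by simp

lemma J_nonleader_other: "s \<noteq> astar \<Longrightarrow> b \<noteq> s \<Longrightarrow> b \<noteq> astar \<Longrightarrow> J p s b astar = p astar"
  unfolding jump_def by simp

lemma drift_leader:
  assumes "pvec p"
  shows "(\<Sum>b\<in>UNIV. p b * r b * (\<phi> (J p astar b astar) - \<phi> (p astar)))
       = p astar * r astar * (\<phi> (p astar + W p / p astar) - \<phi> (p astar))
         + (\<Sum>b\<in>UNIV-{astar}. p b * r b * (\<phi> (p astar - al \<beta> (p b) * p b) - \<phi> (p astar)))"
  by (subst sum_UNIV_remove[of _ astar]) (simp add: J_leader_self J_leader_other)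

lemma drift_nonleader:
  assumes "pvec p" "s \<noteq> astar"
  shows "(\<Sum>b\<in>UNIV. p b * r b * (\<phi> (J p s b astar) - \<phi> (p astar)))
       = p astar * r astar * (\<phi> (p astar + al \<beta> (p astar) * p astar) - \<phi> (p astar))
         + p s * r s * (\<phi> (p astar - al \<beta> (p astar) * (p astar)\<^sup>2 / p s) - \<phi> (p astar))"
proof -
  have "(\<Sum>b\<in>UNIV. p b * r b * (\<phi> (J p s b astar) - \<phi> (p astar)))
      = (\<Sum>b\<in>{astar, s}. p b * r b * (\<phi> (J p s b astar) - \<phi> (p astar)))"
    by (rule sum.mono_neutral_right) (auto simp: J_nonleader_other assms)
  also have "\<dots> = p astar * r astar * (\<phi> (J p s astar astar) - \<phi> (p astar)) + p s * r s * (\<phi> (J p s s astar) - \<phi> (p astar))"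
    using assms by simp
  finally show ?thesis using assms by (simp add: J_nonleader_s J_nonleader_astar)
qed

lemma q_drift_leader:
  assumes "pvec p"
  shows "(\<Sum>b\<in>UNIV. p b * r b * ((1 - J p astar b astar) - (1 - p astar))) \<le> - D * W p"
proof -
  have ps: "0 < p astar" using pvec_pos[OF assms] by simp
  have "(\<Sum>b\<in>UNIV. p b * r b * ((1 - J p astar b astar) - (1 - p astar)))
     = p astar * r astar * ((1 - (p astar + W p / p astar)) - (1 - p astar))
         + (\<Sum>b\<in>UNIV-{astar}. p b * r b * ((1 - (p astar - al \<beta> (p b) * p b)) - (1 - p astar)))"
    using drift_leader[OF assms, of "\<lambda>y. 1 - y"] by simp
  also have "\<dots> = - (r astar * W p) + (\<Sum>b\<in>UNIV-{astar}. r b * (al \<beta> (p b) * (p b)\<^sup>2))"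
    using ps by (simp add: power2_eq_square algebra_simps)
  also have "\<dots> = - (\<Sum>b\<in>UNIV-{astar}. (r astar - r b) * (al \<beta> (p b) * (p b)\<^sup>2))"
    unfolding W_def by (simp add: sum_distrib_left sum_subtractf algebra_simps)
  also have "\<dots> \<le> - (\<Sum>b\<in>UNIV-{astar}. D * (al \<beta> (p b) * (p b)\<^sup>2))"
    using gap al_p[OF assms]
    by (intro le_imp_neg_le sum_mono mult_right_mono) (auto simp: algebra_simps)
  also have "\<dots> = - D * W p" unfolding W_def sum_distrib_left[symmetric] by simp
  finally show ?thesis .
qed

end


context sl begin

definition "rho0 = max (1/2) (1 - 2 * D * gg (1/4))"

lemma rho0_lt1: "rho0 < 1"
  unfolding rho0_def using gg_pos[of "1/4"] D by simp

lemma rho0_ge: "1/2 \<le> rho0" unfolding rho0_def by simp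

lemma leader_unique: assumes "pvec p" "1/2 < p astar" "s \<in> argmax_set p" shows "s = astar"
proof (rule ccontr)
  assume "s \<noteq> astar"
  then have "p astar + p s \<le> 1" using pvec_le_sum[OF assms(1), of astar s] by simp
  moreover have "p astar \<le> p s" using argmax_le[OF assms(3)] .
  ultimately show False using assms(2) by simp
qed

lemma L0_real: assumes "pvec p" "1/2 < p astar" "s \<in> argmax_set p"
  shows "Ex (\<lambda>p. 2 * (1 - p astar)) p s \<le> 2 * (1 - p astar)"
proof -
  have s: "s = astar" using leader_unique[OF assms] .
  have "(\<Sum>b\<in>UNIV. p b * r b * (2 * (1 - J p s b astar) - 2 * (1 - p astar)))
      = 2 * (\<Sum>b\<in>UNIV. p b * r b * ((1 - J p astar b astar) - (1 - p astar)))"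
    unfolding s by (simp add: sum_distrib_left algebra_simps)
  also have "\<dots> \<le> 2 * (- D * W p)" using q_drift_leader[OF assms(1)] by simp
  also have "\<dots> \<le> 0" using W_nonneg[OF assms(1)] D by (simp add: mult_nonneg_nonneg)
  finally show ?thesis using Ex_alt[OF assms(1)] by simp
qed

lemma L1_real: assumes "pvec p" "1/2 < p astar" "s \<in> argmax_set p"
  shows "Ex (\<lambda>p. min 1 (2 * (1 - p astar))) p s \<le> rho0"
proof (cases "1 - p astar \<le> 1/4")
  case True
  have "Ex (\<lambda>p. min 1 (2 * (1 - p astar))) p s \<le> Ex (\<lambda>p. 2 * (1 - p astar)) p s"
    by (rule Ex_mono[OF assms(1)]) simp
  also have "\<dots> \<le> 2 * (1 - p astar)" by (rule L0_real[OF assms])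
  also have "\<dots> \<le> rho0" using True rho0_ge by simp
  finally show ?thesis .
next
  case False
  have s: "s = astar" using leader_unique[OF assms] .
  have ps: "0 < p astar" using pvec_pos[OF assms(1)] .
  define G where "G = (\<lambda>p::'a \<Rightarrow> real. min 1 (2 * (1 - p astar)))"
  define H where "H = (\<lambda>b. if b = astar then 2 * ((1 - p astar) - W p / p astar) else 1)"
  have GJ: "G (J p s b) \<le> H b" for b
    unfolding G_def H_def s using J_leader_self[of p] by auto
  have "Ex G p s \<le> (\<Sum>b\<in>UNIV. p b * (r b * H b + (1 - r b) * 1))"
    unfolding Ex_def using pvec_pos[OF assms(1)] r0 r1 GJ
    by (intro sum_mono mult_left_mono add_mono) (auto simp: G_def intro: less_imp_le)
  also have "\<dots> = (\<Sum>b\<in>UNIV. p b + p b * r b * (H b - 1))"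
    by (rule sum.cong) (auto simp: algebra_simps)
  also have "\<dots> = 1 + (\<Sum>b\<in>UNIV. p b * r b * (H b - 1))"
    using pvec_sum[OF assms(1)] by (simp add: sum.distrib)
  also have "(\<Sum>b\<in>UNIV. p b * r b * (H b - 1)) = p astar * r astar * (H astar - 1)"
    by (subst sum_UNIV_remove[of _ astar]) (simp add: H_def)
  also have "p astar * r astar * (H astar - 1) = - (p astar * r astar * (2 * p astar - 1)) - 2 * r astar * W p"
    unfolding H_def using ps by (simp add: algebra_simps)
  also have "\<dots> \<le> - 2 * r astar * W p"
    using assms(2) ps r0[of astar] by (simp add: mult_nonneg_nonneg)
  finally have 1: "Ex G p s \<le> 1 - 2 * r astar * W p" by simp
  obtain a where a: "a \<noteq> astar" using exists_big[OF assms(1), of "1 - p astar"] False by auto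
  have rD: "D \<le> r astar" using gap[OF a] r0[of a] by simp
  have Wg: "gg (1/4) \<le> W p" using W_lb[OF assms(1), of "1/4"] False by simp
  have "D * gg (1/4) \<le> r astar * W p"
    using rD Wg gg_pos[of "1/4"] D by (intro mult_mono) auto
  then have "Ex G p s \<le> 1 - 2 * D * gg (1/4)" using 1 by simp
  then show ?thesis unfolding G_def rho0_def by simp
qed


definition "NN = real CARD('a)"
definition "p1 = min (1 / (6 * NN)) (exp (1 - 11 / D))"
definition "p2 = 2 * p1"
definition "hh y = 1 / (min y p2)\<^sup>2"
definition "cc = D * \<beta>"
definition "AA e = max ((9 / p1\<^sup>2 + cc) / (D * al \<beta> p1 * p1\<^sup>2)) (cc / (D * gg e))"
definition "V e p = AA e * (1 - p astar) + hh (p astar)"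

lemma NN_ge1: "1 \<le> NN" unfolding NN_def by (simp add: Suc_leI)

lemma p1_pos: "0 < p1" unfolding p1_def using NN_ge1 by simp

lemma p1_le: "p1 \<le> 1 / (6 * NN)" "p1 \<le> exp (1 - 11 / D)" unfolding p1_def by auto

lemma p1_le6: "p1 \<le> 1/6"
proof -
  have "1 / (6 * NN) \<le> 1 / 6" using NN_ge1 by (simp add: divide_le_eq)
  then show ?thesis using p1_le by linarith
qed

lemma cc_pos: "0 < cc" unfolding cc_def using D beta by simp

lemma alp1_pos: "0 < al \<beta> p1" using al_pos[OF beta(1) p1_pos] p1_le6 by simp

lemma AA_ge1: "(9 / p1\<^sup>2 + cc) \<le> AA e * (D * al \<beta> p1 * p1\<^sup>2)"
proof -
  have pos: "0 < D * al \<beta> p1 * p1\<^sup>2" using D alp1_pos p1_pos by simp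
  have "(9 / p1\<^sup>2 + cc) / (D * al \<beta> p1 * p1\<^sup>2) \<le> AA e" unfolding AA_def by simp
  then show ?thesis by (simp only: pos_divide_le_eq[OF pos])
qed

lemma AA_ge2: assumes "0 < e" "e \<le> 1" shows "cc \<le> AA e * (D * gg e)"
proof -
  have pos: "0 < D * gg e" using D gg_pos[OF assms] by simp
  have "cc / (D * gg e) \<le> AA e" unfolding AA_def by simp
  then show ?thesis by (simp only: pos_divide_le_eq[OF pos])
qed

lemma AA_nonneg: "0 \<le> AA e"
proof -
  have "0 < 9 / p1\<^sup>2 + cc" using p1_pos cc_pos by (intro add_pos_pos divide_pos_pos) auto
  then have "0 < (9 / p1\<^sup>2 + cc) / (D * al \<beta> p1 * p1\<^sup>2)"
    using D alp1_pos p1_pos by (intro divide_pos_pos) auto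
  then show ?thesis unfolding AA_def by simp
qed

lemma hh_nonneg: "0 \<le> hh y" unfolding hh_def by simp

lemma hh_small: "0 < y \<Longrightarrow> y \<le> p2 \<Longrightarrow> hh y = 1 / y\<^sup>2" unfolding hh_def by simp

lemma hh_big: "p2 \<le> y \<Longrightarrow> hh y = 1 / p2\<^sup>2" unfolding hh_def by simp

lemma hh_bound: assumes "p1 / 3 \<le> y" shows "hh y \<le> 9 / p1\<^sup>2"
proof -
  have m: "p1 / 3 \<le> min y p2" using assms p1_pos unfolding p2_def by simp
  have "0 < p1 / 3" using p1_pos by simp
  then have "(p1 / 3)\<^sup>2 \<le> (min y p2)\<^sup>2" using m by (intro power_mono) auto
  then have "1 / (min y p2)\<^sup>2 \<le> 1 / (p1 / 3)\<^sup>2" using \<open>0 < p1 / 3\<close>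
    by (intro divide_left_mono mult_pos_pos) auto
  then show ?thesis unfolding hh_def by (simp add: power_divide)
qed

lemma V_nonneg: assumes "pvec p" shows "0 \<le> V e p"
proof -
  have "0 \<le> AA e * (1 - p astar)" using AA_nonneg[of e] pvec_le1[OF assms, of astar] by simp
  then show ?thesis unfolding V_def using hh_nonneg[of "p astar"] by simp
qed

lemma V_drift_leader: assumes "pvec p" "0 < e" "e \<le> 1/2" and True: "astar \<in> argmax_set p"
  shows "Ex (V e) p astar \<le> V e p - (if e \<le> 1 - p astar then cc else 0)"
proof -
  have ps: "1 / NN \<le> p astar"
    using pvec_max_ge[OF assms(1) True] unfolding NN_def .
  have p2le: "p2 \<le> 1 / (3 * NN)" unfolding p2_def using p1_le(1) by simp
  have pge: "1 / (3 * NN) \<le> p astar / 3" using ps by simp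
  have hJ: "hh (J p astar b astar) = hh (p astar)" for b
  proof -
    have "p astar / 3 \<le> J p astar b astar" using jump_lb[OF assms(1) True] beta by simp
    then have "p2 \<le> J p astar b astar" using p2le pge by linarith
    moreover have "p2 \<le> p astar" using p2le pge NN_ge1 pvec_pos[OF assms(1), of astar] by linarith
    ultimately show ?thesis using hh_big by simp
  qed
  have "(\<Sum>b\<in>UNIV. p b * r b * (V e (J p astar b) - V e p))
      = AA e * (\<Sum>b\<in>UNIV. p b * r b * ((1 - J p astar b astar) - (1 - p astar)))"
    unfolding V_def using hJ by (simp add: sum_distrib_left algebra_simps)
  also have "\<dots> \<le> AA e * (- D * W p)"
    using q_drift_leader[OF assms(1)] AA_nonneg by (intro mult_left_mono) auto
  also have "\<dots> \<le> - (if e \<le> 1 - p astar then cc else 0)"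
  proof (cases "e \<le> 1 - p astar")
    case True
    have "cc \<le> AA e * (D * gg e)" using AA_ge2 assms by simp
    also have "\<dots> \<le> AA e * (D * W p)"
      using W_lb[OF assms(1,2) True] AA_nonneg D by (intro mult_left_mono) auto
    finally show ?thesis using True by simp
  next
    case False
    then show ?thesis using AA_nonneg W_nonneg[OF assms(1)] D by (simp add: mult_nonneg_nonneg)
  qed
  finally show ?thesis using Ex_alt[OF assms(1)] by simp
qed

lemma V_drift_nonleader: assumes p: "pvec p" and e: "0 < e" "e \<le> 1/2" and s: "s \<in> argmax_set p" "s \<noteq> astar"
  shows "Ex (V e) p s \<le> V e p - (if e \<le> 1 - p astar then cc else 0)"
proof -
  define x where "x = p astar"
  define a where "a = al \<beta> x"
  define y1 where "y1 = x + a * x"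
  define y2 where "y2 = x - a * x\<^sup>2 / p s"
  define \<phi> where "\<phi> = (\<lambda>y. AA e * (1 - y) + hh y)"
  have xpos: "0 < x" unfolding x_def using pvec_pos[OF p] .
  have pss: "x \<le> p s" unfolding x_def using argmax_le[OF s(1)] .
  have sum1: "x + p s \<le> 1" unfolding x_def using pvec_le_sum[OF p s(2)[symmetric]] by simp
  have x12: "x \<le> 1/2" using pss sum1 by simp
  have psp: "0 < p s" using pvec_pos[OF p] .
  have a0: "0 \<le> a" unfolding a_def using al_nonneg[of \<beta> x] beta xpos x12 by simp
  have ifc: "(if e \<le> 1 - p astar then cc else 0) = cc" using x12 e unfolding x_def by simp
  have y1lb: "x / 3 \<le> y1" unfolding y1_def using xpos a0 by (simp add: mult_nonneg_nonneg)
  have y2lb: "x / 3 \<le> y2"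
    using jump_lb[OF p s(1), of \<beta> astar s] beta J_nonleader_s[OF s(2), of p]
    unfolding y2_def a_def x_def by simp
  have eq: "(\<Sum>b\<in>UNIV. p b * r b * (V e (J p s b) - V e p))
      = - (AA e * (a * x\<^sup>2) * (r astar - r s)) + (x * r astar * (hh y1 - hh x) + p s * r s * (hh y2 - hh x))"
  proof -
    have "(\<Sum>b\<in>UNIV. p b * r b * (V e (J p s b) - V e p)) = (\<Sum>b\<in>UNIV. p b * r b * (\<phi> (J p s b astar) - \<phi> (p astar)))"
      unfolding V_def \<phi>_def by simp
    also have "\<dots> = x * r astar * (\<phi> y1 - \<phi> x) + p s * r s * (\<phi> y2 - \<phi> x)"
      unfolding drift_nonleader[OF p s(2)] x_def y1_def y2_def a_def ..
    also have "\<dots> = - (AA e * (a * x\<^sup>2) * (r astar - r s)) + (x * r astar * (hh y1 - hh x) + p s * r s * (hh y2 - hh x))"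
      unfolding \<phi>_def y1_def y2_def using psp by (simp add: field_simps power2_eq_square)
    finally show ?thesis .
  qed
  have rg: "D \<le> r astar - r s" using gap[OF s(2)] by simp
  have Apart: "- (AA e * (a * x\<^sup>2) * (r astar - r s)) \<le> - (AA e * (a * x\<^sup>2) * D)"
    using rg AA_nonneg a0 by (intro le_imp_neg_le mult_left_mono) (auto intro: mult_nonneg_nonneg)
  have main: "- (AA e * (a * x\<^sup>2) * (r astar - r s)) + (x * r astar * (hh y1 - hh x) + p s * r s * (hh y2 - hh x)) \<le> - cc"
  proof (cases "x \<le> p1")
    case True
    have aD: "a \<le> D / 11" unfolding a_def using al_small[of \<beta> D x] beta D xpos True p1_le(2) by simp
    have a1: "a \<le> 1" using aD D by simp
    have "a * x \<le> 1 * x" using a1 xpos by (intro mult_right_mono) auto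
    then have y1le: "y1 \<le> p2" unfolding y1_def p2_def using True by linarith
    have y2le: "y2 \<le> p2" unfolding y2_def p2_def using True a0 xpos psp p1_pos
      by (smt (verit) divide_nonneg_pos mult_nonneg_nonneg zero_le_power2)
    have h1: "hh y1 = 1 / y1\<^sup>2" using hh_small y1le y1lb xpos by simp
    have h2: "hh y2 = 1 / y2\<^sup>2" using hh_small y2le y2lb xpos by simp
    have h0: "hh x = 1 / x\<^sup>2" using hh_small True xpos p1_pos unfolding p2_def by simp
    have "x * r astar * (hh y1 - hh x) + p s * r s * (hh y2 - hh x) \<le> - (D * a / x)"
      unfolding h1 h2 h0
      using core_ineq[OF xpos pss a0 aD D r0[of astar] r1[of astar] r0[of s] r1[of s], folded y1_def y2_def] gap[OF s(2)] by simp
    also have "\<dots> \<le> - (D * \<beta>)"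
    proof -
      have "\<beta> \<le> a / x" unfolding a_def using al_over_p[of \<beta> x] beta xpos x12 by simp
      then have "D * \<beta> \<le> D * (a / x)" using D by (intro mult_left_mono) auto
      then show ?thesis by (simp add: times_divide_eq_right[symmetric] del: times_divide_eq_right)
    qed
    finally have "x * r astar * (hh y1 - hh x) + p s * r s * (hh y2 - hh x) \<le> - cc" unfolding cc_def .
    moreover have "- (AA e * (a * x\<^sup>2) * D) \<le> 0" using AA_nonneg a0 D by (simp add: mult_nonneg_nonneg)
    ultimately show ?thesis using Apart by linarith
  next
    case False
    have "al \<beta> p1 * p1\<^sup>2 \<le> a * x\<^sup>2" unfolding a_def
      using False p1_pos beta x12 al_mono[of \<beta> p1 x] alp1_pos
      by (intro mult_mono power_mono) auto
    then have "(AA e * D) * (al \<beta> p1 * p1\<^sup>2) \<le> (AA e * D) * (a * x\<^sup>2)"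
      using AA_nonneg[of e] D by (intro mult_left_mono) auto
    then have "AA e * (D * al \<beta> p1 * p1\<^sup>2) \<le> AA e * (a * x\<^sup>2) * D"
      by (simp add: ac_simps)
    then have A2: "- (AA e * (a * x\<^sup>2) * D) \<le> - (9 / p1\<^sup>2 + cc)" using AA_ge1[of e] by linarith
    have hb1: "hh y1 \<le> 9 / p1\<^sup>2" using hh_bound y1lb False by simp
    have hb2: "hh y2 \<le> 9 / p1\<^sup>2" using hh_bound y2lb False by simp
    have "x * r astar * (hh y1 - hh x) + p s * r s * (hh y2 - hh x) \<le> x * 1 * (9 / p1\<^sup>2) + p s * 1 * (9 / p1\<^sup>2)"
    proof (rule add_mono)
      have d1: "hh y1 - hh x \<le> 9 / p1\<^sup>2" using hb1 hh_nonneg[of x] by linarith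
      have "x * r astar * (hh y1 - hh x) \<le> x * r astar * (9 / p1\<^sup>2)"
        using d1 xpos r0[of astar] by (intro mult_left_mono) auto
      also have "\<dots> \<le> x * 1 * (9 / p1\<^sup>2)" using xpos r1[of astar] by (intro mult_right_mono mult_left_mono) auto
      finally show "x * r astar * (hh y1 - hh x) \<le> x * 1 * (9 / p1\<^sup>2)" .
      have d2: "hh y2 - hh x \<le> 9 / p1\<^sup>2" using hb2 hh_nonneg[of x] by linarith
      have "p s * r s * (hh y2 - hh x) \<le> p s * r s * (9 / p1\<^sup>2)"
        using d2 psp r0[of s] by (intro mult_left_mono) auto
      also have "\<dots> \<le> p s * 1 * (9 / p1\<^sup>2)" using psp r1[of s] by (intro mult_right_mono mult_left_mono) auto
      finally show "p s * r s * (hh y2 - hh x) \<le> p s * 1 * (9 / p1\<^sup>2)" .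
    qed
    also have "\<dots> = (x + p s) * (9 / p1\<^sup>2)" by (simp only: mult_1_right distrib_right)
    also have "\<dots> \<le> 1 * (9 / p1\<^sup>2)" using sum1 by (intro mult_right_mono) auto
    finally show ?thesis using A2 Apart by linarith
  qed
  show ?thesis using Ex_alt[OF p, of "V e" s] eq main ifc by simp
qed

lemma V_drift: assumes "pvec p" "0 < e" "e \<le> 1/2" "s \<in> argmax_set p"
  shows "Ex (V e) p s \<le> V e p - (if e \<le> 1 - p astar then cc else 0)"
  using V_drift_leader[OF assms(1-3)] V_drift_nonleader[OF assms] assms(4) by (cases "s = astar") auto

end


lemma least_eq_iff:
  fixes Q :: "'a::{finite,linorder} \<Rightarrow> bool"
  assumes "\<exists>a. Q a"
  shows "(LEAST a. Q a) = b \<longleftrightarrow> Q b \<and> (\<forall>c. c < b \<longrightarrow> \<not> Q c)"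
proof -
  define m where "m = Min {a. Q a}"
  have ne: "{a. Q a} \<noteq> {}" using assms by auto
  have Qm: "Q m" unfolding m_def using Min_in[OF _ ne] by auto
  have mle: "\<And>y. Q y \<Longrightarrow> m \<le> y" unfolding m_def by (auto intro: Min_le)
  have L: "(LEAST a. Q a) = m" by (rule Least_equality) (use Qm mle in auto)
  show ?thesis
  proof
    assume "(LEAST a. Q a) = b"
    then have "m = b" using L by simp
    then show "Q b \<and> (\<forall>c. c < b \<longrightarrow> \<not> Q c)" using Qm mle by (auto simp: not_le[symmetric])
  next
    assume h: "Q b \<and> (\<forall>c. c < b \<longrightarrow> \<not> Q c)"
    then have "m \<le> b" using mle by auto
    moreover have "\<not> m < b" using h Qm by auto
    ultimately show "(LEAST a. Q a) = b" using L by simp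
  qed
qed

lemma played_eq:
  "played p u = b \<longleftrightarrow>
     ((\<exists>a. u < (\<Sum>x\<in>{..a}. p x)) \<and> u < (\<Sum>x\<in>{..b}. p x) \<and> (\<forall>c. c < b \<longrightarrow> \<not> u < (\<Sum>x\<in>{..c}. p x)))
     \<or> (\<not> (\<exists>a. u < (\<Sum>x\<in>{..a}. p x)) \<and> b = Max UNIV)"
  unfolding played_def using least_eq_iff[of "\<lambda>a. u < (\<Sum>x\<in>{..a}. p x)" b] by auto

lemma measurable_played:
  fixes P :: "'m \<Rightarrow> 'a::{finite,linorder} \<Rightarrow> real"
  assumes [measurable]: "\<And>a. (\<lambda>\<omega>. P \<omega> a) \<in> borel_measurable M" "U \<in> borel_measurable M"
  shows "(\<lambda>\<omega>. played (P \<omega>) (U \<omega>)) \<in> M \<rightarrow>\<^sub>M count_space UNIV"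
  unfolding measurable_count_space_eq2_countable
proof (intro conjI ballI)
  fix b :: 'a
  have "(\<lambda>\<omega>. played (P \<omega>) (U \<omega>)) -` {b} \<inter> space M = {\<omega>\<in>space M. played (P \<omega>) (U \<omega>) = b}"
    by auto
  also have "\<dots> =
    {\<omega>\<in>space M. ((\<exists>a. U \<omega> < (\<Sum>x\<in>{..a}. P \<omega> x)) \<and> U \<omega> < (\<Sum>x\<in>{..b}. P \<omega> x) \<and> (\<forall>c. c < b \<longrightarrow> \<not> U \<omega> < (\<Sum>x\<in>{..c}. P \<omega> x)))
     \<or> (\<not> (\<exists>a. U \<omega> < (\<Sum>x\<in>{..a}. P \<omega> x)) \<and> b = Max UNIV)}"
    by (simp only: played_eq)
  also have "\<dots> \<in> sets M" by measurable
  finally show "(\<lambda>\<omega>. played (P \<omega>) (U \<omega>)) -` {b} \<inter> space M \<in> sets M" .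
qed auto

lemma measurable_argmax:
  fixes P :: "'m \<Rightarrow> 'a::{finite,linorder} \<Rightarrow> real"
  assumes [measurable]: "\<And>a. (\<lambda>\<omega>. P \<omega> a) \<in> borel_measurable M"
  shows "(\<lambda>\<omega>. argmax_set (P \<omega>)) \<in> M \<rightarrow>\<^sub>M count_space UNIV"
  unfolding measurable_count_space_eq2_countable
proof (intro conjI ballI)
  fix A :: "'a set"
  have "(\<lambda>\<omega>. argmax_set (P \<omega>)) -` {A} \<inter> space M = {\<omega>\<in>space M. \<forall>a. (a \<in> A \<longleftrightarrow> (\<forall>b. P \<omega> b \<le> P \<omega> a))}"
    by (auto simp: argmax_set_def)
  also have "\<dots> \<in> sets M" by measurable
  finally show "(\<lambda>\<omega>. argmax_set (P \<omega>)) -` {A} \<inter> space M \<in> sets M" .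
qed auto

lemma measurable_leader:
  fixes P :: "'m \<Rightarrow> 'a::{finite,linorder} \<Rightarrow> real"
  assumes [measurable]: "\<And>a. (\<lambda>\<omega>. P \<omega> a) \<in> borel_measurable M" "V \<in> borel_measurable M"
  shows "(\<lambda>\<omega>. leader (P \<omega>) (V \<omega>)) \<in> M \<rightarrow>\<^sub>M count_space UNIV"
proof -
  define f where "f = (\<lambda>(A::'a set) \<omega>. (let L = sorted_list_of_set A in L ! min (nat \<lfloor>V \<omega> * real (length L)\<rfloor>) (length L - 1)))"
  have "(\<lambda>\<omega>. f (argmax_set (P \<omega>)) \<omega>) \<in> M \<rightarrow>\<^sub>M count_space UNIV"
  proof (rule measurable_compose_countable'[where f=f and g="\<lambda>\<omega>. argmax_set (P \<omega>)" and I=UNIV])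
    fix A :: "'a set"
    define L where "L = sorted_list_of_set A"
    have "(\<lambda>\<omega>. \<lfloor>V \<omega> * real (length L)\<rfloor>) \<in> M \<rightarrow>\<^sub>M count_space UNIV" by measurable
    moreover have "(\<lambda>z::int. L ! min (nat z) (length L - 1)) \<in> count_space UNIV \<rightarrow>\<^sub>M count_space UNIV" by simp
    ultimately have "(\<lambda>\<omega>. L ! min (nat \<lfloor>V \<omega> * real (length L)\<rfloor>) (length L - 1)) \<in> M \<rightarrow>\<^sub>M count_space UNIV"
      using measurable_compose by fastforce
    then show "(\<lambda>\<omega>. f A \<omega>) \<in> M \<rightarrow>\<^sub>M count_space UNIV" unfolding f_def L_def Let_def by simp
  qed (auto intro: measurable_argmax)
  then show ?thesis unfolding f_def leader_def by simp
qed


lemma measurable_step_fixed: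
  fixes P :: "'m \<Rightarrow> 'a::{finite,linorder} \<Rightarrow> real" and R :: "'m \<Rightarrow> 'a \<Rightarrow> bool"
  assumes [measurable]: "\<And>a. (\<lambda>\<omega>. P \<omega> a) \<in> borel_measurable M" "\<And>c. Measurable.pred M (\<lambda>\<omega>. R \<omega> c)"
  shows "(\<lambda>\<omega>. samba_step (al \<beta>) (P \<omega>) s b (R \<omega>) a) \<in> borel_measurable M"
  unfolding samba_step_def Let_def al_def by measurable

lemma measurable_step:
  fixes P :: "'m \<Rightarrow> 'a::{finite,linorder} \<Rightarrow> real" and R :: "'m \<Rightarrow> 'a \<Rightarrow> bool"
  assumes [measurable]: "\<And>a. (\<lambda>\<omega>. P \<omega> a) \<in> borel_measurable M" "\<And>c. Measurable.pred M (\<lambda>\<omega>. R \<omega> c)"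
    "U \<in> borel_measurable M" "V \<in> borel_measurable M"
  shows "(\<lambda>\<omega>. samba_step (al \<beta>) (P \<omega>) (leader (P \<omega>) (V \<omega>)) (played (P \<omega>) (U \<omega>)) (R \<omega>) a) \<in> borel_measurable M"
proof (rule measurable_compose_countable'[where f="\<lambda>s \<omega>. samba_step (al \<beta>) (P \<omega>) s (played (P \<omega>) (U \<omega>)) (R \<omega>) a"
      and g="\<lambda>\<omega>. leader (P \<omega>) (V \<omega>)" and I=UNIV])
  fix s :: 'a
  show "(\<lambda>\<omega>. samba_step (al \<beta>) (P \<omega>) s (played (P \<omega>) (U \<omega>)) (R \<omega>) a) \<in> borel_measurable M"
    by (rule measurable_compose_countable'[where f="\<lambda>b \<omega>. samba_step (al \<beta>) (P \<omega>) s b (R \<omega>) a"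
      and g="\<lambda>\<omega>. played (P \<omega>) (U \<omega>)" and I=UNIV])
       (simp_all add: measurable_step_fixed[OF assms(1,2)] measurable_played[OF assms(1,3)])
qed (simp_all add: measurable_leader[OF assms(1,4)])

lemma U_borel: "measurable M (uniform_measure lborel {0..1::real}) = measurable M borel"
  by (rule measurable_cong_sets) simp_all

lemma noise_fst[measurable]: "fst \<in> noise r \<rightarrow>\<^sub>M borel"
proof -
  have "fst \<in> noise r \<rightarrow>\<^sub>M uniform_measure lborel {0..1::real}" unfolding noise_def by (rule measurable_fst)
  then show ?thesis by (simp add: U_borel)
qed

lemma noise_snd: "snd \<in> noise r \<rightarrow>\<^sub>M (uniform_measure lborel {0..1::real} \<Otimes>\<^sub>M measure_pmf (Pi_pmf UNIV False (\<lambda>a. bernoulli_pmf (r a))))"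
  unfolding noise_def by (rule measurable_snd)

lemma noise_fst_snd[measurable]: "(\<lambda>x. fst (snd x)) \<in> noise r \<rightarrow>\<^sub>M borel"
proof -
  have "(\<lambda>x. fst (snd x)) \<in> noise r \<rightarrow>\<^sub>M uniform_measure lborel {0..1::real}"
    using measurable_compose[OF noise_snd[of r] measurable_fst] by (simp add: comp_def)
  then show ?thesis by (simp add: U_borel)
qed

lemma noise_R[measurable]: "(\<lambda>x. snd (snd x) c) \<in> noise (r::'a::{finite,linorder} \<Rightarrow> real) \<rightarrow>\<^sub>M count_space UNIV"
proof -
  have "(\<lambda>x. snd (snd x)) \<in> noise r \<rightarrow>\<^sub>M measure_pmf (Pi_pmf UNIV False (\<lambda>a. bernoulli_pmf (r a)))"
    using measurable_compose[OF noise_snd[of r] measurable_snd] by (simp add: comp_def)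
  then have 1: "(\<lambda>x. snd (snd x)) \<in> noise r \<rightarrow>\<^sub>M count_space UNIV"
    using measurable_cong_sets[OF refl sets_measure_pmf_count_space, of "noise r" "Pi_pmf UNIV False (\<lambda>a. bernoulli_pmf (r a))"]
    by simp
  have 2: "(\<lambda>R::'a \<Rightarrow> bool. R c) \<in> count_space UNIV \<rightarrow>\<^sub>M count_space UNIV" by simp
  from measurable_compose[OF 1 2] show ?thesis by simp
qed

lemma measurable_Fs:
  fixes P :: "'m \<Rightarrow> 'a::{finite,linorder} \<Rightarrow> real" and r :: "'a \<Rightarrow> real"
  assumes P: "\<And>a. (\<lambda>\<omega>. P \<omega> a) \<in> borel_measurable M" and X: "X \<in> M \<rightarrow>\<^sub>M noise r"
  shows "(\<lambda>\<omega>. Fs \<beta> (P \<omega>) (X \<omega>) a) \<in> borel_measurable M"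
proof -
  have m1: "(\<lambda>\<omega>. fst (X \<omega>)) \<in> borel_measurable M"
    using measurable_compose[OF X noise_fst] by (simp add: comp_def)
  have m2: "(\<lambda>\<omega>. fst (snd (X \<omega>))) \<in> borel_measurable M"
    using measurable_compose[OF X noise_fst_snd] by (simp add: comp_def)
  have m3: "Measurable.pred M (\<lambda>\<omega>. snd (snd (X \<omega>)) c)" for c
    using measurable_compose[OF X noise_R[of c r]] unfolding pred_def by (simp add: comp_def)
  have "(\<lambda>\<omega>. samba_step (al \<beta>) (P \<omega>) (leader (P \<omega>) (fst (snd (X \<omega>)))) (played (P \<omega>) (fst (X \<omega>))) (snd (snd (X \<omega>))) a) \<in> borel_measurable M"
    by (rule measurable_step[OF P m3 m1 m2])
  then show ?thesis unfolding Fs_def by (simp add: case_prod_unfold)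
qed

lemma measurable_samba:
  "(\<lambda>\<omega>. samba (al \<beta>) p \<omega> t a) \<in> borel_measurable (noise_seq (r::'a::{finite,linorder} \<Rightarrow> real))"
proof (induction t arbitrary: a)
  case 0
  then show ?case by simp
next
  case (Suc t)
  have X: "(\<lambda>\<omega>. \<omega> t) \<in> noise_seq r \<rightarrow>\<^sub>M noise r" unfolding noise_seq_def by (rule measurable_component_singleton) simp
  show ?case unfolding samba_Suc by (rule measurable_Fs[OF Suc X])
qed


abbreviation "UU \<equiv> uniform_measure lborel {0..1::real}"

lemma prob_UU: "prob_space UU" by (rule prob_space_uniform_measure) simp_all

lemma prob_noise: "prob_space (noise r)"
  unfolding noise_def by (intro prob_space_pair prob_UU prob_space_measure_pmf)

lemma prob_Omega: "prob_space (noise_seq r)"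
  unfolding noise_seq_def by (intro prob_space_PiM prob_noise)

lemma sf_Omega: "sigma_finite_measure (noise_seq r)"
  using prob_Omega prob_space_imp_sigma_finite by blast

lemma seq_space: "sequence_space (noise r)"
  unfolding sequence_space_def product_prob_space_def product_prob_space_axioms_def product_sigma_finite_def
  using prob_noise prob_space_imp_sigma_finite by blast

lemma markov:
  assumes f: "f \<in> borel_measurable (noise_seq r)"
  shows "(\<integral>\<^sup>+\<omega>. f \<omega> \<partial>noise_seq r) = (\<integral>\<^sup>+\<omega>. (\<integral>\<^sup>+\<omega>'. f (case_nat (\<omega> 0) \<omega>') \<partial>noise_seq r) \<partial>noise_seq r)"
    and "(\<lambda>\<omega>. \<integral>\<^sup>+\<omega>'. f (case_nat (\<omega> 0) \<omega>') \<partial>noise_seq r) \<in> borel_measurable (noise_seq r)"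
proof -
  interpret S: sequence_space "noise r" by (rule seq_space)
  have m: "(\<lambda>(\<omega>,\<omega>'). comb_seq (Suc 0) \<omega> \<omega>') \<in> (noise_seq r \<Otimes>\<^sub>M noise_seq r) \<rightarrow>\<^sub>M noise_seq r"
    using measurable_comb_seq unfolding noise_seq_def .
  have mf: "(\<lambda>z. f (case_nat (fst z 0) (snd z))) \<in> borel_measurable (noise_seq r \<Otimes>\<^sub>M noise_seq r)"
    using measurable_compose[OF m f] by (simp add: case_prod_unfold comp_def)
  have "(\<integral>\<^sup>+\<omega>. f \<omega> \<partial>noise_seq r) = (\<integral>\<^sup>+\<omega>. f \<omega> \<partial>distr (noise_seq r \<Otimes>\<^sub>M noise_seq r) (noise_seq r) (\<lambda>(\<omega>,\<omega>'). comb_seq (Suc 0) \<omega> \<omega>'))"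
    using S.PiM_comb_seq[of "Suc 0"] by (simp add: noise_seq_def)
  also have "\<dots> = (\<integral>\<^sup>+z. f (case_nat (fst z 0) (snd z)) \<partial>(noise_seq r \<Otimes>\<^sub>M noise_seq r))"
    by (subst nn_integral_distr[OF m]) (use f in \<open>simp_all add: case_prod_unfold measurable_distr_eq1\<close>)
  also have "\<dots> = (\<integral>\<^sup>+\<omega>. (\<integral>\<^sup>+\<omega>'. f (case_nat (\<omega> 0) \<omega>') \<partial>noise_seq r) \<partial>noise_seq r)"
    using sigma_finite_measure.nn_integral_fst[OF sf_Omega mf] by simp
  finally show "(\<integral>\<^sup>+\<omega>. f \<omega> \<partial>noise_seq r) = (\<integral>\<^sup>+\<omega>. (\<integral>\<^sup>+\<omega>'. f (case_nat (\<omega> 0) \<omega>') \<partial>noise_seq r) \<partial>noise_seq r)" .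
  show "(\<lambda>\<omega>. \<integral>\<^sup>+\<omega>'. f (case_nat (\<omega> 0) \<omega>') \<partial>noise_seq r) \<in> borel_measurable (noise_seq r)"
    using sigma_finite_measure.borel_measurable_nn_integral_fst[OF sf_Omega mf] by simp
qed

lemma space_Omega: "\<omega> \<in> space (noise_seq r) \<Longrightarrow> \<omega> i \<in> space (noise r)"
  unfolding noise_seq_def by (auto simp: space_PiM)

lemma distr_Omega0: "distr (noise_seq r) (noise r) (\<lambda>\<omega>. \<omega> 0) = noise r"
  unfolding noise_seq_def by (rule distr_PiM_component) (auto intro: prob_noise)

lemma markov_le:
  assumes f: "f \<in> borel_measurable (noise_seq r)" and H: "H \<in> borel_measurable (noise r)"
    and le: "\<And>x. x \<in> space (noise r) \<Longrightarrow> (\<integral>\<^sup>+\<omega>'. f (case_nat x \<omega>') \<partial>noise_seq r) \<le> H x"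
  shows "(\<integral>\<^sup>+\<omega>. f \<omega> \<partial>noise_seq r) \<le> (\<integral>\<^sup>+x. H x \<partial>noise r)"
proof -
  have m0: "(\<lambda>\<omega>. \<omega> 0) \<in> noise_seq r \<rightarrow>\<^sub>M noise r"
    unfolding noise_seq_def by (rule measurable_component_singleton) simp
  have "(\<integral>\<^sup>+\<omega>. f \<omega> \<partial>noise_seq r) = (\<integral>\<^sup>+\<omega>. (\<integral>\<^sup>+\<omega>'. f (case_nat (\<omega> 0) \<omega>') \<partial>noise_seq r) \<partial>noise_seq r)"
    by (rule markov(1)[OF f])
  also have "\<dots> \<le> (\<integral>\<^sup>+\<omega>. H (\<omega> 0) \<partial>noise_seq r)"
    by (rule nn_integral_mono) (use le space_Omega in blast)
  also have "\<dots> = (\<integral>\<^sup>+x. H x \<partial>distr (noise_seq r) (noise r) (\<lambda>\<omega>. \<omega> 0))"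
    by (subst nn_integral_distr[OF m0]) (use H in \<open>simp_all add: measurable_distr_eq1\<close>)
  also have "\<dots> = (\<integral>\<^sup>+x. H x \<partial>noise r)" by (simp add: distr_Omega0)
  finally show ?thesis .
qed


abbreviation "BB r \<equiv> measure_pmf (Pi_pmf UNIV False (\<lambda>a::'a::{finite,linorder}. bernoulli_pmf (r a)))"

lemma played_borel: "(\<lambda>u. played (p::'a::{finite,linorder} \<Rightarrow> real) u) \<in> borel \<rightarrow>\<^sub>M count_space UNIV"
proof -
  have "(\<lambda>\<omega>. played ((\<lambda>_. p) \<omega>) ((\<lambda>u. u) \<omega>)) \<in> borel \<rightarrow>\<^sub>M count_space UNIV"
    by (rule measurable_played) (rule measurable_const, simp, rule measurable_ident_sets, rule refl)
  then show ?thesis by simp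
qed

lemma leader_borel: "(\<lambda>v. leader (p::'a::{finite,linorder} \<Rightarrow> real) v) \<in> borel \<rightarrow>\<^sub>M count_space UNIV"
proof -
  have "(\<lambda>\<omega>. leader ((\<lambda>_. p) \<omega>) ((\<lambda>u. u) \<omega>)) \<in> borel \<rightarrow>\<^sub>M count_space UNIV"
    by (rule measurable_leader) (rule measurable_const, simp, rule measurable_ident_sets, rule refl)
  then show ?thesis by simp
qed

lemma played_set: "{u. played (p::'a::{finite,linorder} \<Rightarrow> real) u = b} \<in> sets borel"
proof -
  have "(\<lambda>u. played p u) -` {b} \<inter> space borel \<in> sets borel"
    by (rule measurable_sets[OF played_borel]) simp
  then show ?thesis by (simp add: vimage_def)
qed

lemma cum_split: "(\<Sum>x\<in>{..b}. p x) = (\<Sum>x\<in>{..<b}. p x) + (p (b::'a::{finite,linorder}) :: real)"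
proof -
  have "{..b} = insert b {..<b}" by auto
  then show ?thesis by (simp add: add.commute)
qed

lemma cum_lt: assumes "c = Max {..<b}" "{..<b} \<noteq> {}" shows "{..c} = {..<(b::'a::{finite,linorder})}"
proof -
  have cin: "c \<in> {..<b}" using assms Max_in[of "{..<b}"] by simp
  show ?thesis
  proof (intro set_eqI iffI)
    fix x assume "x \<in> {..c}" then show "x \<in> {..<b}" using cin by auto
  next
    fix x assume "x \<in> {..<b}" then show "x \<in> {..c}" using assms by (auto intro: Max_ge)
  qed
qed

lemma played_interval:
  assumes p: "pvec p" and u: "0 \<le> u" "u \<le> 1" and pl: "played p u = b"
  shows "(\<Sum>x\<in>{..b}. p x) - p b \<le> u \<and> u \<le> (\<Sum>x\<in>{..b}. p x)"
proof -
  have pos: "\<And>x. 0 \<le> p x" using pvec_pos[OF p] less_imp_le by blast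
  from pl[unfolded played_eq] show ?thesis
  proof (elim disjE conjE)
    assume ex: "\<exists>a. u < (\<Sum>x\<in>{..a}. p x)" and lt: "u < (\<Sum>x\<in>{..b}. p x)"
      and nl: "\<forall>c. c < b \<longrightarrow> \<not> u < (\<Sum>x\<in>{..c}. p x)"
    have "(\<Sum>x\<in>{..<b}. p x) \<le> u"
    proof (cases "{..<b} = {}")
      case True then show ?thesis using u by simp
    next
      case False
      define c where "c = Max {..<b}"
      have "c < b" using Max_in[of "{..<b}"] False unfolding c_def by auto
      then have "\<not> u < (\<Sum>x\<in>{..c}. p x)" using nl by blast
      then show ?thesis using cum_lt[OF c_def False] by simp
    qed
    then show ?thesis using lt cum_split[of p b] by simp
  next
    assume nex: "\<not> (\<exists>a. u < (\<Sum>x\<in>{..a}. p x))" and bm: "b = Max UNIV"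
    have "{..b} = UNIV" using bm by (auto intro: Max_ge)
    then have "(\<Sum>x\<in>{..b}. p x) = 1" using pvec_sum[OF p] by simp
    moreover have "\<not> u < (\<Sum>x\<in>{..b}. p x)" using nex by blast
    ultimately show ?thesis using u pos[of b] by simp
  qed
qed

lemma played_measure:
  assumes p: "pvec p" shows "emeasure UU {u. played p u = b} \<le> ennreal (p b)"
proof -
  define c where "c = (\<Sum>x\<in>{..b}. p x)"
  have sub: "{0..1} \<inter> {u. played p u = b} \<subseteq> {c - p b..c}"
    using played_interval[OF p] unfolding c_def by auto
  have "emeasure UU {u. played p u = b} = emeasure lborel ({0..1} \<inter> {u. played p u = b})"
    using played_set[of p b] by (simp add: sets_lborel divide_ennreal_def)
  also have "\<dots> \<le> emeasure lborel {c - p b..c}"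
    by (rule emeasure_mono[OF sub]) simp
  also have "\<dots> = ennreal (p b)" using pvec_pos[OF p, of b] by simp
  finally show ?thesis .
qed

lemma bern_int:
  fixes r :: "'a::{finite,linorder} \<Rightarrow> real"
  assumes r: "0 \<le> r b" "r b \<le> 1" and c: "0 \<le> c1" "0 \<le> c0"
  shows "(\<integral>\<^sup>+R. ennreal (if R b then c1 else c0) \<partial>BB r) = ennreal (r b * c1 + (1 - r b) * c0)"
proof -
  have "(\<integral>\<^sup>+R. ennreal (if R b then c1 else c0) \<partial>BB r)
     = (\<integral>\<^sup>+y. ennreal (if y then c1 else c0) \<partial>measure_pmf (map_pmf (\<lambda>R. R b) (Pi_pmf UNIV False (\<lambda>a. bernoulli_pmf (r a)))))"
    by (simp add: nn_integral_map_pmf)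
  also have "map_pmf (\<lambda>R. R b) (Pi_pmf UNIV False (\<lambda>a. bernoulli_pmf (r a))) = bernoulli_pmf (r b)"
    by (simp add: Pi_pmf_component)
  also have "(\<integral>\<^sup>+y. ennreal (if y then c1 else c0) \<partial>measure_pmf (bernoulli_pmf (r b)))
      = (\<Sum>y\<in>UNIV. ennreal (if y then c1 else c0) * ennreal (pmf (bernoulli_pmf (r b)) y))"
    by (rule nn_integral_measure_pmf_support) auto
  also have "\<dots> = ennreal c1 * ennreal (r b) + ennreal c0 * ennreal (1 - r b)"
    using r by (simp add: UNIV_bool)
  also have "\<dots> = ennreal (r b * c1 + (1 - r b) * c0)"
    using r c by (simp add: ennreal_mult[symmetric] ennreal_plus[symmetric] mult.commute del: ennreal_plus)
  finally show ?thesis .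
qed

lemma prod_int:
  assumes M1: "sigma_finite_measure M1" and M2: "sigma_finite_measure M2"
    and f: "f \<in> borel_measurable M1" and g: "g \<in> borel_measurable M2"
  shows "(\<integral>\<^sup>+z. f (fst z) * g (snd z) \<partial>(M1 \<Otimes>\<^sub>M M2)) = (\<integral>\<^sup>+x. f x \<partial>M1) * (\<integral>\<^sup>+y. g y \<partial>M2)"
proof -
  have m: "(\<lambda>z. f (fst z) * g (snd z)) \<in> borel_measurable (M1 \<Otimes>\<^sub>M M2)" using f g by measurable
  have "(\<integral>\<^sup>+z. f (fst z) * g (snd z) \<partial>(M1 \<Otimes>\<^sub>M M2)) = (\<integral>\<^sup>+x. \<integral>\<^sup>+y. f x * g y \<partial>M2 \<partial>M1)"
    using sigma_finite_measure.nn_integral_fst[OF M2 m] by simp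
  also have "\<dots> = (\<integral>\<^sup>+x. f x * (\<integral>\<^sup>+y. g y \<partial>M2) \<partial>M1)"
    by (rule nn_integral_cong) (simp add: nn_integral_cmult[OF g])
  also have "\<dots> = (\<integral>\<^sup>+x. f x \<partial>M1) * (\<integral>\<^sup>+y. g y \<partial>M2)"
    by (rule nn_integral_multc[OF f])
  finally show ?thesis .
qed


lemma UU_src: "measurable UU N = measurable borel N"
  by (rule measurable_cong_sets) simp_all

lemma BB_src: "measurable (BB r) N = measurable (count_space UNIV) N"
  by (rule measurable_cong_sets) simp_all

lemma onestep:
  fixes r :: "'a::{finite,linorder} \<Rightarrow> real" and G :: "('a \<Rightarrow> real) \<Rightarrow> real"
  assumes r0: "\<And>a. 0 \<le> r a" and r1: "\<And>a. r a \<le> 1" and p: "pvec p"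
    and G0: "\<And>p. pvec p \<Longrightarrow> 0 \<le> G p" and beta: "0 \<le> \<beta>" "\<beta> \<le> 1"
    and K: "\<And>s. s \<in> argmax_set p \<Longrightarrow> (\<Sum>b\<in>UNIV. p b * (r b * G (jump (al \<beta>) p s b) + (1 - r b) * G p)) \<le> K"
  shows "(\<integral>\<^sup>+x. ennreal (G (Fs \<beta> p x)) \<partial>noise r) \<le> ennreal K"
proof -
  define \<Psi> where "\<Psi> b z = ennreal (if snd z b then G (jump (al \<beta>) p (leader p (fst z)) b) else G p)"
    for b and z :: "real \<times> ('a \<Rightarrow> bool)"
  define \<phi> where "\<phi> b v = r b * G (jump (al \<beta>) p (leader p v) b) + (1 - r b) * G p" for b v
  have GJ0: "0 \<le> G (jump (al \<beta>) p (leader p v) b)" for v b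
    by (rule G0[OF pvec_jump[OF p leader_in beta]])
  have Gp0: "0 \<le> G p" by (rule G0[OF p])
  have \<phi>0: "0 \<le> \<phi> b v" for b v unfolding \<phi>_def using r0[of b] r1[of b] GJ0 Gp0
    by (intro add_nonneg_nonneg mult_nonneg_nonneg) auto
  have eq: "ennreal (G (Fs \<beta> p x)) = (\<Sum>b\<in>UNIV. indicator {u. played p u = b} (fst x) * \<Psi> b (snd x))" for x
  proof -
    obtain u v R where x: "x = (u, v, R)" by (cases x) auto
    have "(\<Sum>b\<in>UNIV. indicator {u. played p u = b} (fst x) * \<Psi> b (snd x))
        = (\<Sum>b\<in>UNIV. if played p u = b then \<Psi> b (v, R) else 0)"
      unfolding x by (intro sum.cong) (auto simp: indicator_def)
    also have "\<dots> = \<Psi> (played p u) (v, R)" by simp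
    also have "\<dots> = ennreal (G (Fs \<beta> p x))" unfolding x \<Psi>_def by (simp add: Fs_eq[OF p])
    finally show ?thesis by simp
  qed
  have leadUU: "(\<lambda>v. leader p v) \<in> UU \<rightarrow>\<^sub>M count_space UNIV" unfolding UU_src by (rule leader_borel)
  have mG: "(\<lambda>s. ennreal (G (jump (al \<beta>) p s b))) \<in> count_space UNIV \<rightarrow>\<^sub>M borel" for b by simp
  have m\<phi>r: "(\<lambda>v. \<phi> b v) \<in> borel_measurable UU" for b
  proof -
    have "(\<lambda>s. r b * G (jump (al \<beta>) p s b) + (1 - r b) * G p) \<in> count_space UNIV \<rightarrow>\<^sub>M borel" by simp
    from measurable_compose[OF leadUU this] show ?thesis unfolding \<phi>_def by (simp add: comp_def)
  qed
  have m\<phi>: "(\<lambda>v. ennreal (\<phi> b v)) \<in> borel_measurable UU" for b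
    using m\<phi>r[of b] by measurable
  have m\<Psi>: "\<Psi> b \<in> borel_measurable (UU \<Otimes>\<^sub>M BB r)" for b
  proof -
    have l: "(\<lambda>z. leader p (fst z)) \<in> (UU \<Otimes>\<^sub>M BB r) \<rightarrow>\<^sub>M count_space UNIV"
      using measurable_compose[OF measurable_fst[of UU "BB r"] leadUU] by (simp add: comp_def)
    have R: "(\<lambda>z. snd z b) \<in> (UU \<Otimes>\<^sub>M BB r) \<rightarrow>\<^sub>M count_space UNIV"
    proof -
      have "(\<lambda>R::'a \<Rightarrow> bool. R b) \<in> BB r \<rightarrow>\<^sub>M count_space UNIV" unfolding BB_src by simp
      from measurable_compose[OF measurable_snd[of UU "BB r"] this] show ?thesis by (simp add: comp_def)
    qed
    have g1: "(\<lambda>z. ennreal (G (jump (al \<beta>) p (leader p (fst z)) b))) \<in> borel_measurable (UU \<Otimes>\<^sub>M BB r)"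
      using measurable_compose[OF l mG[of b]] by (simp add: comp_def)
    have "(\<lambda>z. if snd z b then ennreal (G (jump (al \<beta>) p (leader p (fst z)) b)) else ennreal (G p)) \<in> borel_measurable (UU \<Otimes>\<^sub>M BB r)"
      by (rule measurable_If[OF g1 measurable_const]) (use R in \<open>simp_all add: pred_def\<close>)
    then show ?thesis unfolding \<Psi>_def by (simp add: if_distrib)
  qed
  have mI: "indicator {u. played p u = b} \<in> borel_measurable UU" for b
    by (rule borel_measurable_indicator) (simp add: played_set)
  have sfUU: "sigma_finite_measure UU" using prob_UU prob_space_imp_sigma_finite by blast
  have sfUB: "sigma_finite_measure (UU \<Otimes>\<^sub>M BB r)"
    using prob_space_pair[OF prob_UU prob_space_measure_pmf] prob_space_imp_sigma_finite by blast
  have sfB: "sigma_finite_measure (BB r)" using prob_space_measure_pmf prob_space_imp_sigma_finite by blast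
  have "(\<integral>\<^sup>+x. ennreal (G (Fs \<beta> p x)) \<partial>noise r)
      = (\<integral>\<^sup>+x. (\<Sum>b\<in>UNIV. indicator {u. played p u = b} (fst x) * \<Psi> b (snd x)) \<partial>noise r)"
    by (simp add: eq)
  also have "\<dots> = (\<Sum>b\<in>UNIV. \<integral>\<^sup>+x. indicator {u. played p u = b} (fst x) * \<Psi> b (snd x) \<partial>noise r)"
  proof (rule nn_integral_sum)
    fix b
    have "(\<lambda>x. indicator {u. played p u = b} (fst x) * \<Psi> b (snd x)) \<in> borel_measurable (UU \<Otimes>\<^sub>M (UU \<Otimes>\<^sub>M BB r))"
      using mI m\<Psi> by measurable
    then show "(\<lambda>x. indicator {u. played p u = b} (fst x) * \<Psi> b (snd x)) \<in> borel_measurable (noise r)"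
      unfolding noise_def .
  qed
  also have "\<dots> = (\<Sum>b\<in>UNIV. emeasure UU {u. played p u = b} * (\<integral>\<^sup>+z. \<Psi> b z \<partial>(UU \<Otimes>\<^sub>M BB r)))"
  proof (rule sum.cong[OF refl])
    fix b
    have "(\<integral>\<^sup>+x. indicator {u. played p u = b} (fst x) * \<Psi> b (snd x) \<partial>noise r)
       = (\<integral>\<^sup>+u. indicator {u. played p u = b} u \<partial>UU) * (\<integral>\<^sup>+z. \<Psi> b z \<partial>(UU \<Otimes>\<^sub>M BB r))"
      unfolding noise_def by (rule prod_int[OF sfUU sfUB mI m\<Psi>])
    also have "(\<integral>\<^sup>+u. indicator {u. played p u = b} u \<partial>UU) = emeasure UU {u. played p u = b}"
      by (rule nn_integral_indicator) (simp add: played_set)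
    finally show "(\<integral>\<^sup>+x. indicator {u. played p u = b} (fst x) * \<Psi> b (snd x) \<partial>noise r)
       = emeasure UU {u. played p u = b} * (\<integral>\<^sup>+z. \<Psi> b z \<partial>(UU \<Otimes>\<^sub>M BB r))" .
  qed
  also have "\<dots> = (\<Sum>b\<in>UNIV. emeasure UU {u. played p u = b} * (\<integral>\<^sup>+v. ennreal (\<phi> b v) \<partial>UU))"
  proof (rule sum.cong[OF refl])
    fix b
    have "(\<integral>\<^sup>+z. \<Psi> b z \<partial>(UU \<Otimes>\<^sub>M BB r)) = (\<integral>\<^sup>+v. \<integral>\<^sup>+R. \<Psi> b (v, R) \<partial>BB r \<partial>UU)"
      using sigma_finite_measure.nn_integral_fst[OF sfB m\<Psi>[of b]] by simp
    also have "\<dots> = (\<integral>\<^sup>+v. ennreal (\<phi> b v) \<partial>UU)"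
    proof (rule nn_integral_cong)
      fix v
      show "(\<integral>\<^sup>+R. \<Psi> b (v, R) \<partial>BB r) = ennreal (\<phi> b v)"
      proof -
        have e: "(\<lambda>R. \<Psi> b (v, R)) = (\<lambda>R. ennreal (if R b then G (jump (al \<beta>) p (leader p v) b) else G p))"
          by (simp add: \<Psi>_def cong: if_cong)
        show ?thesis unfolding e \<phi>_def
          by (rule bern_int[of r b "G (jump (al \<beta>) p (leader p v) b)" "G p", OF r0[of b] r1[of b] GJ0 Gp0])
      qed
    qed
    finally show "emeasure UU {u. played p u = b} * (\<integral>\<^sup>+z. \<Psi> b z \<partial>(UU \<Otimes>\<^sub>M BB r))
        = emeasure UU {u. played p u = b} * (\<integral>\<^sup>+v. ennreal (\<phi> b v) \<partial>UU)" by simp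
  qed
  also have "\<dots> \<le> (\<Sum>b\<in>UNIV. ennreal (p b) * (\<integral>\<^sup>+v. ennreal (\<phi> b v) \<partial>UU))"
    by (intro sum_mono mult_right_mono played_measure[OF p]) simp
  also have "\<dots> = (\<Sum>b\<in>UNIV. \<integral>\<^sup>+v. ennreal (p b * \<phi> b v) \<partial>UU)"
    using pvec_pos[OF p] \<phi>0
  proof (intro sum.cong refl)
    fix b
    have "ennreal (p b) * (\<integral>\<^sup>+v. ennreal (\<phi> b v) \<partial>UU) = (\<integral>\<^sup>+v. ennreal (p b) * ennreal (\<phi> b v) \<partial>UU)"
      by (rule nn_integral_cmult[OF m\<phi>, symmetric])
    also have "\<dots> = (\<integral>\<^sup>+v. ennreal (p b * \<phi> b v) \<partial>UU)"
      using pvec_pos[OF p, of b] \<phi>0 by (intro nn_integral_cong) (simp add: ennreal_mult)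
    finally show "ennreal (p b) * (\<integral>\<^sup>+v. ennreal (\<phi> b v) \<partial>UU) = (\<integral>\<^sup>+v. ennreal (p b * \<phi> b v) \<partial>UU)" .
  qed
  also have "\<dots> = (\<integral>\<^sup>+v. (\<Sum>b\<in>UNIV. ennreal (p b * \<phi> b v)) \<partial>UU)"
    by (rule nn_integral_sum[symmetric]) (use m\<phi>r in measurable)
  also have "\<dots> = (\<integral>\<^sup>+v. ennreal (\<Sum>b\<in>UNIV. p b * \<phi> b v) \<partial>UU)"
  proof (intro nn_integral_cong)
    fix v
    show "(\<Sum>b\<in>UNIV. ennreal (p b * \<phi> b v)) = ennreal (\<Sum>b\<in>UNIV. p b * \<phi> b v)"
      by (rule sum_ennreal) (use pvec_pos[OF p] \<phi>0 in \<open>simp add: less_imp_le\<close>)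
  qed
  also have "\<dots> \<le> (\<integral>\<^sup>+v. ennreal K \<partial>UU)"
  proof (rule nn_integral_mono)
    fix v
    have "(\<Sum>b\<in>UNIV. p b * \<phi> b v) \<le> K" unfolding \<phi>_def by (rule K[OF leader_in])
    then show "ennreal (\<Sum>b\<in>UNIV. p b * \<phi> b v) \<le> ennreal K" by (rule ennreal_leI)
  qed
  also have "\<dots> = ennreal K" using prob_space.emeasure_space_1[OF prob_UU] by simp
  finally show ?thesis .
qed


definition upc :: "(nat \<Rightarrow> real) \<Rightarrow> nat \<Rightarrow> nat" where
  "upc q n = (\<Sum>t<n. if q t < 1/2 \<and> 1/2 \<le> q (Suc t) then 1 else 0)"

lemma upc_0[simp]: "upc q 0 = 0" by (simp add: upc_def)

lemma upc_Suc: "upc q (Suc n) = upc q n + (if q n < 1/2 \<and> 1/2 \<le> q (Suc n) then 1 else 0)"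
  by (simp add: upc_def)

lemma upc_shift: "upc q (Suc n) = (if q 0 < 1/2 \<and> 1/2 \<le> q (Suc 0) then 1 else 0) + upc (\<lambda>t. q (Suc t)) n"
  unfolding upc_def sum.lessThan_Suc_shift by simp

context sl begin

abbreviation "Om \<equiv> noise_seq r"

definition Q :: "('a \<Rightarrow> real) \<Rightarrow> (nat \<Rightarrow> real \<times> real \<times> ('a \<Rightarrow> bool)) \<Rightarrow> nat \<Rightarrow> real" where
  "Q p \<omega> t = 1 - samba (al \<beta>) p \<omega> t astar"

definition cr :: "('a \<Rightarrow> real) \<Rightarrow> ('a \<Rightarrow> real) \<Rightarrow> nat" where
  "cr p p' = (if 1 - p astar < 1/2 \<and> 1/2 \<le> 1 - p' astar then 1 else 0)"

definition Pr :: "('a \<Rightarrow> real) \<Rightarrow> nat \<Rightarrow> nat \<Rightarrow> ennreal" where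
  "Pr p n k = (\<integral>\<^sup>+\<omega>. (if k \<le> upc (Q p \<omega>) n then 1 else 0) \<partial>Om)"

lemma Q_meas[measurable]: "(\<lambda>\<omega>. Q p \<omega> t) \<in> borel_measurable Om"
  unfolding Q_def using measurable_samba[of \<beta> p t astar r] by measurable

lemma ind_meas: "(\<lambda>\<omega>. if k \<le> upc (Q p \<omega>) n then 1 else 0 :: ennreal) \<in> borel_measurable Om"
  unfolding upc_def by measurable

lemma Q_0: "Q p \<omega> 0 = 1 - p astar" by (simp add: Q_def)

lemma Q_shift: "Q p (case_nat x \<omega>) (Suc t) = Q (Fs \<beta> p x) \<omega> t"
  unfolding Q_def by (simp add: samba_shift del: samba.simps(2))

lemma upc_Q_shift: "upc (Q p (case_nat x \<omega>)) (Suc n) = cr p (Fs \<beta> p x) + upc (Q (Fs \<beta> p x) \<omega>) n"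
proof -
  have "Q p (case_nat x \<omega>) (Suc 0) = 1 - Fs \<beta> p x astar" using Q_shift[of p x \<omega> 0] by (simp add: Q_def)
  then show ?thesis unfolding upc_shift[of _ n] cr_def by (simp add: Q_0 Q_shift)
qed

lemma prob_Om: "prob_space Om" by (rule prob_Omega)

lemma Pr_le1: "Pr p n k \<le> 1"
proof -
  have "Pr p n k \<le> (\<integral>\<^sup>+\<omega>. 1 \<partial>Om)" unfolding Pr_def by (intro nn_integral_mono) auto
  also have "\<dots> = 1" using prob_space.emeasure_space_1[OF prob_Om] by simp
  finally show ?thesis .
qed

lemma Pr_k0: "Pr p n 0 = 1"
  unfolding Pr_def using prob_space.emeasure_space_1[OF prob_Om] by simp

lemma Pr_n0: "Pr p 0 (Suc k) = 0"
  unfolding Pr_def by simp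

lemma Pr_inner: "(\<integral>\<^sup>+\<omega>'. (if k \<le> upc (Q p (case_nat x \<omega>')) (Suc n) then 1 else 0) \<partial>Om)
   = Pr (Fs \<beta> p x) n (k - cr p (Fs \<beta> p x))"
  unfolding Pr_def upc_Q_shift by (intro nn_integral_cong) auto

lemma Pr_step: "Pr p (Suc n) k = (\<integral>\<^sup>+\<omega>. Pr (Fs \<beta> p (\<omega> 0)) n (k - cr p (Fs \<beta> p (\<omega> 0))) \<partial>Om)"
  and Pr_step_meas: "(\<lambda>\<omega>. Pr (Fs \<beta> p (\<omega> 0)) n (k - cr p (Fs \<beta> p (\<omega> 0)))) \<in> borel_measurable Om"
proof -
  note m = markov[OF ind_meas[of k p "Suc n"]]
  show "Pr p (Suc n) k = (\<integral>\<^sup>+\<omega>. Pr (Fs \<beta> p (\<omega> 0)) n (k - cr p (Fs \<beta> p (\<omega> 0))) \<partial>Om)"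
    using m(1) unfolding Pr_def[of p "Suc n" k] Pr_inner[unfolded Pr_def] Pr_def .
  show "(\<lambda>\<omega>. Pr (Fs \<beta> p (\<omega> 0)) n (k - cr p (Fs \<beta> p (\<omega> 0)))) \<in> borel_measurable Om"
    using m(2) unfolding Pr_inner .
qed

lemma Pr_step_le:
  assumes H: "H \<in> borel_measurable (noise r)"
    and le: "\<And>x. x \<in> space (noise r) \<Longrightarrow> Pr (Fs \<beta> p x) n (k - cr p (Fs \<beta> p x)) \<le> H x"
  shows "Pr p (Suc n) k \<le> (\<integral>\<^sup>+x. H x \<partial>noise r)"
  unfolding Pr_def[of p "Suc n" k]
  by (rule markov_le[OF ind_meas H]) (use le in \<open>simp add: Pr_inner\<close>)

lemma Fs_astar_meas: "(\<lambda>x. Fs \<beta> p x astar) \<in> borel_measurable (noise r)"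
  using measurable_Fs[of "\<lambda>_. p" "noise r" "\<lambda>x. x" r \<beta> astar] by simp


lemma onestep_sl:
  assumes p: "pvec p" and G0: "\<And>p'. pvec p' \<Longrightarrow> 0 \<le> G p'"
    and K: "\<And>s. s \<in> argmax_set p \<Longrightarrow> Ex G p s \<le> K"
  shows "(\<integral>\<^sup>+x. ennreal (G (Fs \<beta> p x)) \<partial>noise r) \<le> ennreal K"
  by (rule onestep[OF r0 r1 p G0 _ _ K[unfolded Ex_def]]) (use beta in auto)

lemma L0: assumes "pvec p" "1 - p astar < 1/2" shows "Pr p n 1 \<le> ennreal (2 * (1 - p astar))"
  using assms
proof (induction n arbitrary: p)
  case 0
  then show ?case using Pr_n0[of p 0] by simp
next
  case (Suc n)
  have "Pr p (Suc n) 1 \<le> (\<integral>\<^sup>+x. ennreal (2 * (1 - Fs \<beta> p x astar)) \<partial>noise r)"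
  proof (rule Pr_step_le)
    show "(\<lambda>x. ennreal (2 * (1 - Fs \<beta> p x astar))) \<in> borel_measurable (noise r)"
      using Fs_astar_meas[of p] by measurable
    fix x
    define p' where "p' = Fs \<beta> p x"
    have pv: "pvec p'" unfolding p'_def using pvec_Fs[OF Suc.prems(1)] beta by simp
    show "Pr (Fs \<beta> p x) n (1 - cr p (Fs \<beta> p x)) \<le> ennreal (2 * (1 - Fs \<beta> p x astar))"
    proof (cases "1/2 \<le> 1 - p' astar")
      case True
      then have "cr p p' = 1" using Suc.prems(2) by (simp add: cr_def)
      then show ?thesis using True Pr_k0 unfolding p'_def[symmetric] by (simp add: ennreal_ge_1)
    next
      case False
      then have "cr p p' = 0" by (simp add: cr_def)
      then show ?thesis using Suc.IH[OF pv] False unfolding p'_def[symmetric] by simp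
    qed
  qed
  also have "\<dots> \<le> ennreal (2 * (1 - p astar))"
  proof (rule onestep_sl[OF Suc.prems(1), where G="\<lambda>p. 2 * (1 - p astar)"])
    show "\<And>p'. pvec p' \<Longrightarrow> 0 \<le> 2 * (1 - p' astar)" using pvec_le1 by simp
    show "\<And>s. s \<in> argmax_set p \<Longrightarrow> Ex (\<lambda>p. 2 * (1 - p astar)) p s \<le> 2 * (1 - p astar)"
      by (rule L0_real[OF Suc.prems(1)]) (use Suc.prems(2) in auto)
  qed
  finally show ?case .
qed


lemma L1: assumes "pvec p" "1 - p astar < 1/2" shows "Pr p n 1 \<le> ennreal rho0"
proof (cases n)
  case 0
  then show ?thesis using Pr_n0[of p 0] by simp
next
  case (Suc m)
  have "Pr p (Suc m) 1 \<le> (\<integral>\<^sup>+x. ennreal (min 1 (2 * (1 - Fs \<beta> p x astar))) \<partial>noise r)"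
  proof (rule Pr_step_le)
    show "(\<lambda>x. ennreal (min 1 (2 * (1 - Fs \<beta> p x astar)))) \<in> borel_measurable (noise r)"
      using Fs_astar_meas[of p] by measurable
    fix x
    define p' where "p' = Fs \<beta> p x"
    have pv: "pvec p'" unfolding p'_def using pvec_Fs[OF assms(1)] beta by simp
    show "Pr (Fs \<beta> p x) m (1 - cr p (Fs \<beta> p x)) \<le> ennreal (min 1 (2 * (1 - Fs \<beta> p x astar)))"
    proof (cases "1/2 \<le> 1 - p' astar")
      case True
      then have "cr p p' = 1" using assms(2) by (simp add: cr_def)
      moreover have "min 1 (2 * (1 - p' astar)) = 1" using True by simp
      ultimately show ?thesis using Pr_k0 unfolding p'_def[symmetric] by simp
    next
      case False
      then have "cr p p' = 0" by (simp add: cr_def)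
      moreover have "Pr p' m 1 \<le> ennreal (2 * (1 - p' astar))" using L0[OF pv] False by simp
      moreover have "Pr p' m 1 \<le> 1" by (rule Pr_le1)
      ultimately show ?thesis unfolding p'_def[symmetric] by (simp add: min_def)
    qed
  qed
  also have "\<dots> \<le> ennreal rho0"
  proof (rule onestep_sl[OF assms(1), where G="\<lambda>p. min 1 (2 * (1 - p astar))"])
    show "\<And>p'. pvec p' \<Longrightarrow> 0 \<le> min 1 (2 * (1 - p' astar))" using pvec_le1 by simp
    show "\<And>s. s \<in> argmax_set p \<Longrightarrow> Ex (\<lambda>p. min 1 (2 * (1 - p astar))) p s \<le> rho0"
      by (rule L1_real[OF assms(1)]) (use assms(2) in auto)
  qed
  finally show ?thesis using Suc by simp
qed

lemma prob_const: "(\<integral>\<^sup>+\<omega>. c \<partial>Om) = c"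
  using prob_space.emeasure_space_1[OF prob_Om] by simp

lemma L2: assumes "pvec p" shows "Pr p n 1 \<le> ennreal rho0"
  using assms
proof (induction n arbitrary: p)
  case 0
  then show ?case using Pr_n0[of p 0] by simp
next
  case (Suc n)
  show ?case
  proof (cases "1 - p astar < 1/2")
    case True
    then show ?thesis using L1[OF Suc.prems] by simp
  next
    case False
    have "Pr p (Suc n) 1 = (\<integral>\<^sup>+\<omega>. Pr (Fs \<beta> p (\<omega> 0)) n (1 - cr p (Fs \<beta> p (\<omega> 0))) \<partial>Om)"
      by (rule Pr_step)
    also have "\<dots> \<le> (\<integral>\<^sup>+\<omega>. ennreal rho0 \<partial>Om)"
    proof (rule nn_integral_mono)
      fix \<omega>
      have "cr p (Fs \<beta> p (\<omega> 0)) = 0" using False by (simp add: cr_def)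
      then show "Pr (Fs \<beta> p (\<omega> 0)) n (1 - cr p (Fs \<beta> p (\<omega> 0))) \<le> ennreal rho0"
        using Suc.IH[OF pvec_Fs[OF Suc.prems]] beta by simp
    qed
    also have "\<dots> = ennreal rho0" by (rule prob_const)
    finally show ?thesis .
  qed
qed

lemma L3: assumes "pvec p" shows "Pr p n (Suc k) \<le> ennreal rho0 * Pr p n k"
  using assms
proof (induction n arbitrary: p k)
  case 0
  then show ?case using Pr_n0[of p k] by simp
next
  case (Suc n)
  show ?case
  proof (cases k)
    case 0
    then show ?thesis using L2[OF Suc.prems, of "Suc n"] Pr_k0[of p "Suc n"] by simp
  next
    case (Suc k')
    have "Pr p (Suc n) (Suc k) = (\<integral>\<^sup>+\<omega>. Pr (Fs \<beta> p (\<omega> 0)) n (Suc k - cr p (Fs \<beta> p (\<omega> 0))) \<partial>Om)"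
      by (rule Pr_step)
    also have "\<dots> \<le> (\<integral>\<^sup>+\<omega>. ennreal rho0 * Pr (Fs \<beta> p (\<omega> 0)) n (k - cr p (Fs \<beta> p (\<omega> 0))) \<partial>Om)"
    proof (rule nn_integral_mono)
      fix \<omega>
      have c: "cr p (Fs \<beta> p (\<omega> 0)) \<le> 1" by (simp add: cr_def)
      then have e: "Suc k - cr p (Fs \<beta> p (\<omega> 0)) = Suc (k - cr p (Fs \<beta> p (\<omega> 0)))" using Suc by simp
      show "Pr (Fs \<beta> p (\<omega> 0)) n (Suc k - cr p (Fs \<beta> p (\<omega> 0))) \<le> ennreal rho0 * Pr (Fs \<beta> p (\<omega> 0)) n (k - cr p (Fs \<beta> p (\<omega> 0)))"
        unfolding e by (rule Suc.IH[OF pvec_Fs[OF Suc.prems]]) (use beta in auto)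
    qed
    also have "\<dots> = ennreal rho0 * (\<integral>\<^sup>+\<omega>. Pr (Fs \<beta> p (\<omega> 0)) n (k - cr p (Fs \<beta> p (\<omega> 0))) \<partial>Om)"
      by (rule nn_integral_cmult[OF Pr_step_meas])
    also have "\<dots> = ennreal rho0 * Pr p (Suc n) k" using Pr_step[of p n k] by simp
    finally show ?thesis .
  qed
qed

end


context sl begin

definition LF :: "real \<Rightarrow> ('a \<Rightarrow> real) \<Rightarrow> nat \<Rightarrow> (nat \<Rightarrow> real \<times> real \<times> ('a \<Rightarrow> bool)) \<Rightarrow> ennreal" where
  "LF e p T \<omega> = (\<Sum>t<T. if e \<le> Q p \<omega> t then ennreal cc else 0) + ennreal (V e (samba (al \<beta>) p \<omega> T))"

lemma V_Fs_meas: "(\<lambda>x. V e (Fs \<beta> p x)) \<in> borel_measurable (noise r)"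
  unfolding V_def hh_def using Fs_astar_meas[of p] by measurable

lemma LF_meas: "LF e p T \<in> borel_measurable Om"
proof -
  have [measurable]: "(\<lambda>\<omega>. samba (al \<beta>) p \<omega> T astar) \<in> borel_measurable Om" by (rule measurable_samba)
  show ?thesis unfolding LF_def V_def hh_def by measurable
qed

lemma LF_shift: "LF e p (Suc T) (case_nat x \<omega>) = (if e \<le> 1 - p astar then ennreal cc else 0) + LF e (Fs \<beta> p x) T \<omega>"
  unfolding LF_def sum.lessThan_Suc_shift
  by (simp add: Q_0 Q_shift samba_shift add.assoc del: samba.simps(2))

lemma Ex_nonneg: assumes p: "pvec p" and G0: "\<And>p'. pvec p' \<Longrightarrow> 0 \<le> G p'" and s: "s \<in> argmax_set p"
  shows "0 \<le> Ex G p s"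
  unfolding Ex_def using pvec_pos[OF p] r0 r1 G0[OF p] G0[OF pvec_jump[OF p s]] beta
  by (intro sum_nonneg mult_nonneg_nonneg add_nonneg_nonneg) (auto intro: less_imp_le)

lemma Lyap: assumes "pvec p" "0 < e" "e \<le> 1/2"
  shows "(\<integral>\<^sup>+\<omega>. LF e p T \<omega> \<partial>Om) \<le> ennreal (V e p)"
  using assms(1)
proof (induction T arbitrary: p)
  case 0
  then show ?case unfolding LF_def using prob_const by simp
next
  case (Suc T)
  define c0 where "c0 = (if e \<le> 1 - p astar then cc else 0)"
  have c0e: "(if e \<le> 1 - p astar then ennreal cc else 0) = ennreal c0" unfolding c0_def by simp
  have "(\<integral>\<^sup>+\<omega>. LF e p (Suc T) \<omega> \<partial>Om) \<le> (\<integral>\<^sup>+x. ennreal c0 + ennreal (V e (Fs \<beta> p x)) \<partial>noise r)"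
  proof (rule markov_le[OF LF_meas])
    show "(\<lambda>x. ennreal c0 + ennreal (V e (Fs \<beta> p x))) \<in> borel_measurable (noise r)"
      using V_Fs_meas by measurable
    fix x
    have pv: "pvec (Fs \<beta> p x)" using pvec_Fs[OF Suc.prems] beta by simp
    have "(\<integral>\<^sup>+\<omega>'. LF e p (Suc T) (case_nat x \<omega>') \<partial>Om) = (\<integral>\<^sup>+\<omega>'. ennreal c0 + LF e (Fs \<beta> p x) T \<omega>' \<partial>Om)"
      unfolding LF_shift c0e ..
    also have "\<dots> = ennreal c0 + (\<integral>\<^sup>+\<omega>'. LF e (Fs \<beta> p x) T \<omega>' \<partial>Om)"
      using prob_space.emeasure_space_1[OF prob_Om] by (subst nn_integral_add) (auto simp: LF_meas)
    also have "\<dots> \<le> ennreal c0 + ennreal (V e (Fs \<beta> p x))"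
      using Suc.IH[OF pv] by (rule add_left_mono)
    finally show "(\<integral>\<^sup>+\<omega>'. LF e p (Suc T) (case_nat x \<omega>') \<partial>Om) \<le> ennreal c0 + ennreal (V e (Fs \<beta> p x))" .
  qed
  also have "\<dots> = ennreal c0 + (\<integral>\<^sup>+x. ennreal (V e (Fs \<beta> p x)) \<partial>noise r)"
    using prob_space.emeasure_space_1[OF prob_noise[of r]] V_Fs_meas[of e p] by (subst nn_integral_add) auto
  also have "\<dots> \<le> ennreal c0 + ennreal (V e p - c0)"
  proof (rule add_left_mono, rule onestep_sl[OF Suc.prems])
    show "\<And>p'. pvec p' \<Longrightarrow> 0 \<le> V e p'" by (rule V_nonneg)
    show "\<And>s. s \<in> argmax_set p \<Longrightarrow> Ex (V e) p s \<le> V e p - c0"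
      unfolding c0_def by (rule V_drift[OF Suc.prems assms(2,3)])
  qed
  also have "\<dots> = ennreal (V e p)"
  proof -
    obtain s where s: "s \<in> argmax_set p" using argmax_nonempty[of p] by blast
    have "0 \<le> Ex (V e) p s" by (rule Ex_nonneg[OF Suc.prems V_nonneg s])
    then have "0 \<le> V e p - c0" using V_drift[OF Suc.prems assms(2,3) s] unfolding c0_def by linarith
    moreover have "0 \<le> c0" unfolding c0_def using cc_pos by simp
    ultimately show ?thesis by (simp add: ennreal_plus[symmetric] del: ennreal_plus)
  qed
  finally show ?case .
qed

lemma fm_Om: "finite_measure Om" using prob_Om by (simp add: prob_space_def)

lemma sets_Qe: "{\<omega>\<in>space Om. e \<le> Q p \<omega> t} \<in> sets Om" by measurable

lemma sum_bound: assumes "pvec p" "0 < e" "e \<le> 1/2"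
  shows "(\<Sum>t<T. measure Om {\<omega>\<in>space Om. e \<le> Q p \<omega> t}) \<le> V e p / cc"
proof -
  have "(\<Sum>t<T. emeasure Om {\<omega>\<in>space Om. e \<le> Q p \<omega> t} * ennreal cc)
      = (\<Sum>t<T. \<integral>\<^sup>+\<omega>. (if e \<le> Q p \<omega> t then ennreal cc else 0) \<partial>Om)"
  proof (rule sum.cong[OF refl])
    fix t
    have "(\<integral>\<^sup>+\<omega>. (if e \<le> Q p \<omega> t then ennreal cc else 0) \<partial>Om) = (\<integral>\<^sup>+\<omega>. ennreal cc * indicator {\<omega>\<in>space Om. e \<le> Q p \<omega> t} \<omega> \<partial>Om)"
      by (intro nn_integral_cong) (auto simp: indicator_def)
    also have "\<dots> = ennreal cc * emeasure Om {\<omega>\<in>space Om. e \<le> Q p \<omega> t}"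
      by (rule nn_integral_cmult_indicator[OF sets_Qe])
    finally show "emeasure Om {\<omega>\<in>space Om. e \<le> Q p \<omega> t} * ennreal cc = (\<integral>\<^sup>+\<omega>. (if e \<le> Q p \<omega> t then ennreal cc else 0) \<partial>Om)"
      by (simp add: mult.commute)
  qed
  also have "\<dots> = (\<integral>\<^sup>+\<omega>. (\<Sum>t<T. if e \<le> Q p \<omega> t then ennreal cc else 0) \<partial>Om)"
    by (rule nn_integral_sum[symmetric]) measurable
  also have "\<dots> \<le> (\<integral>\<^sup>+\<omega>. LF e p T \<omega> \<partial>Om)"
    unfolding LF_def by (intro nn_integral_mono) simp
  also have "\<dots> \<le> ennreal (V e p)" by (rule Lyap[OF assms])
  finally have 1: "(\<Sum>t<T. emeasure Om {\<omega>\<in>space Om. e \<le> Q p \<omega> t} * ennreal cc) \<le> ennreal (V e p)" .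
  have "(\<Sum>t<T. emeasure Om {\<omega>\<in>space Om. e \<le> Q p \<omega> t} * ennreal cc)
      = ennreal ((\<Sum>t<T. measure Om {\<omega>\<in>space Om. e \<le> Q p \<omega> t}) * cc)"
    using cc_pos
    by (simp add: finite_measure.emeasure_eq_measure[OF fm_Om] ennreal_mult[symmetric] sum_distrib_right
        sum_ennreal del: ennreal_mult)
  then have "(\<Sum>t<T. measure Om {\<omega>\<in>space Om. e \<le> Q p \<omega> t}) * cc \<le> V e p"
    using 1 V_nonneg[OF assms(1)] by (simp add: ennreal_le_iff)
  then show ?thesis using cc_pos by (simp add: le_divide_eq)
qed

lemma summable_Q: assumes "pvec p" "0 < e" "e \<le> 1/2"
  shows "summable (\<lambda>t. measure Om {\<omega>\<in>space Om. e \<le> Q p \<omega> t})"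
  by (rule summableI_nonneg_bounded[where x="V e p / cc"]) (auto intro: sum_bound[OF assms])

lemma AE_Q: assumes "pvec p" "0 < e" "e \<le> 1/2"
  shows "AE \<omega> in Om. eventually (\<lambda>t. Q p \<omega> t < e) sequentially"
proof -
  have "AE \<omega> in Om. eventually (\<lambda>t. \<omega> \<in> space Om - {\<omega>\<in>space Om. e \<le> Q p \<omega> t}) sequentially"
    by (rule borel_cantelli_AE1[OF sets_Qe _ summable_Q[OF assms]])
       (simp add: finite_measure.emeasure_eq_measure[OF fm_Om])
  then show ?thesis by (rule AE_mp) (auto intro!: AE_I2 elim: eventually_mono)
qed

end


lemma upc_mono: "m \<le> n \<Longrightarrow> upc q m \<le> upc q n"
  unfolding upc_def by (rule sum_mono2) auto

lemma upc_flat: "m \<le> n \<Longrightarrow> (\<And>t. m \<le> t \<Longrightarrow> t < n \<Longrightarrow> \<not> (q t < 1/2 \<and> 1/2 \<le> q (Suc t))) \<Longrightarrow> upc q n = upc q m"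
proof (induction n)
  case 0 then show ?case by simp
next
  case (Suc n)
  show ?case
  proof (cases "m = Suc n")
    case True then show ?thesis by simp
  next
    case False
    then have "m \<le> n" using Suc.prems(1) by simp
    then have "upc q n = upc q m" using Suc.IH Suc.prems(2) by simp
    moreover have "\<not> (q n < 1/2 \<and> 1/2 \<le> q (Suc n))" using Suc.prems(2)[of n] \<open>m \<le> n\<close> by simp
    ultimately show ?thesis by (simp add: upc_Suc)
  qed
qed

lemma hit_inf[simp]: "hit P \<infinity> = \<infinity>" by (simp add: hit_def)

lemma hit_enat: "hit P (enat n) = (if \<exists>t\<ge>n. P t then enat (LEAST t. n \<le> t \<and> P t) else \<infinity>)"
  by (simp add: hit_def)

lemma sigma_inv:
  "(\<forall>m. snd (tau_sigma q k) = enat m \<longrightarrow> upc q m = k \<and> (0 < k \<longrightarrow> 1/2 \<le> q m))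
   \<and> (snd (tau_sigma q k) = \<infinity> \<longrightarrow> (\<forall>n. upc q n < k))"
proof (induction k)
  case 0
  then show ?case by (simp add: zero_enat_def)
next
  case (Suc k)
  define s where "s = snd (tau_sigma q k)"
  have ts: "snd (tau_sigma q (Suc k)) = hit (\<lambda>t. 1/2 \<le> q t) (hit (\<lambda>t. q t < 1/2) s)"
    unfolding s_def by (simp add: Let_def)
  show ?case
  proof (cases s)
    case infinity
    then have "\<forall>n. upc q n < k" using Suc.IH unfolding s_def by simp
    then show ?thesis unfolding ts infinity by (auto simp: less_Suc_eq)
  next
    case (enat m)
    then have IH: "upc q m = k" "0 < k \<Longrightarrow> 1/2 \<le> q m" using Suc.IH unfolding s_def by auto
    show ?thesis
    proof (cases "\<exists>t\<ge>m. q t < 1/2")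
      case False
      then have h: "hit (\<lambda>t. q t < 1/2) s = \<infinity>" unfolding enat by (simp add: hit_enat)
      have "upc q n \<le> k" for n
      proof (cases "n \<le> m")
        case True then show ?thesis using upc_mono[OF True, of q] IH by simp
      next
        case False': False
        have "upc q n = upc q m" by (rule upc_flat) (use False False' in auto)
        then show ?thesis using IH by simp
      qed
      then show ?thesis unfolding ts h by (simp add: less_Suc_eq_le)
    next
      case True
      define t1 where "t1 = (LEAST t. m \<le> t \<and> q t < 1/2)"
      have t1: "m \<le> t1" "q t1 < 1/2" using LeastI_ex[OF True[unfolded Bex_def]] unfolding t1_def
        by auto
      have t1b: "\<And>t. m \<le> t \<Longrightarrow> t < t1 \<Longrightarrow> \<not> q t < 1/2" unfolding t1_def using not_less_Least by blast
      have h: "hit (\<lambda>t. q t < 1/2) s = enat t1" unfolding enat t1_def using True by (simp add: hit_enat)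
      have u1: "upc q t1 = k"
      proof -
        have "upc q t1 = upc q m" by (rule upc_flat[OF t1(1)]) (use t1b in auto)
        then show ?thesis using IH by simp
      qed
      show ?thesis
      proof (cases "\<exists>t\<ge>t1. 1/2 \<le> q t")
        case False
        then have h2: "hit (\<lambda>t. 1/2 \<le> q t) (enat t1) = \<infinity>" by (simp add: hit_enat)
        have "upc q n \<le> k" for n
        proof (cases "n \<le> t1")
          case True then show ?thesis using upc_mono[OF True, of q] u1 by simp
        next
          case False': False
          have "upc q n = upc q t1" by (rule upc_flat) (use False False' in auto)
          then show ?thesis using u1 by simp
        qed
        then show ?thesis unfolding ts h h2 by (simp add: less_Suc_eq_le)
      next
        case True2: True
        define t2 where "t2 = (LEAST t. t1 \<le> t \<and> 1/2 \<le> q t)"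
        have t2: "t1 \<le> t2" "1/2 \<le> q t2" unfolding t2_def
          by (metis (mono_tags, lifting) LeastI_ex True2)+
        have t2b: "\<And>t. t1 \<le> t \<Longrightarrow> t < t2 \<Longrightarrow> q t < 1/2" unfolding t2_def using not_less_Least
          by (metis (mono_tags, lifting) not_le)
        have h2: "hit (\<lambda>t. 1/2 \<le> q t) (enat t1) = enat t2" unfolding t2_def using True2 by (simp add: hit_enat)
        have lt: "t1 < t2" using t2 t1(2) by (metis le_neq_implies_less not_less)
        then obtain t3 where t3: "t2 = Suc t3" "t1 \<le> t3" by (metis Suc_le_eq less_imp_Suc_add le_add1 add_Suc_right)
        have "upc q t3 = upc q t1"
          by (rule upc_flat[OF t3(2)]) (use t2b t3 in \<open>auto simp: not_le\<close>)
        moreover have "q t3 < 1/2" using t2b[of t3] t3 by simp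
        ultimately have "upc q t2 = Suc k" using t3 t2(2) u1 by (simp add: upc_Suc)
        then show ?thesis unfolding ts h h2 using t2(2) by simp
      qed
    qed
  qed
qed

lemma sigma_fin_iff: "sigma_k q k < \<infinity> \<longleftrightarrow> (\<exists>n. k \<le> upc q n)"
proof
  assume "sigma_k q k < \<infinity>"
  then obtain m where "snd (tau_sigma q k) = enat m" unfolding sigma_k_def by (cases "snd (tau_sigma q k)") auto
  then have "upc q m = k" using sigma_inv[of q k] by blast
  then show "\<exists>n. k \<le> upc q n" by auto
next
  assume "\<exists>n. k \<le> upc q n"
  then obtain n where "k \<le> upc q n" by blast
  show "sigma_k q k < \<infinity>"
  proof (rule ccontr)
    assume "\<not> sigma_k q k < \<infinity>"
    then have "snd (tau_sigma q k) = \<infinity>" unfolding sigma_k_def by (simp add: not_less)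
    then have "upc q n < k" using sigma_inv[of q k] by blast
    with \<open>k \<le> upc q n\<close> show False by simp
  qed
qed



context sl begin

lemma sets_upc: "{\<omega>\<in>space Om. k \<le> upc (Q p \<omega>) n} \<in> sets Om"
  unfolding upc_def by measurable

lemma emeasure_sigma:
  "emeasure Om {\<omega>\<in>space Om. sigma_k (Q p \<omega>) k < \<infinity>} = (SUP n. Pr p n k)"
proof -
  define A where "A n = {\<omega>\<in>space Om. k \<le> upc (Q p \<omega>) n}" for n
  have eq: "{\<omega>\<in>space Om. sigma_k (Q p \<omega>) k < \<infinity>} = (\<Union>n. A n)"
    unfolding A_def sigma_fin_iff by auto
  have "range A \<subseteq> sets Om" unfolding A_def using sets_upc by auto
  moreover have "incseq A" unfolding A_def incseq_def using upc_mono order_trans by blast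
  ultimately have "(SUP n. emeasure Om (A n)) = emeasure Om (\<Union>n. A n)" by (rule SUP_emeasure_incseq)
  moreover have "emeasure Om (A n) = Pr p n k" for n
  proof -
    have "Pr p n k = (\<integral>\<^sup>+\<omega>. indicator (A n) \<omega> \<partial>Om)"
      unfolding Pr_def A_def by (intro nn_integral_cong) (auto simp: indicator_def)
    also have "\<dots> = emeasure Om (A n)" by (rule nn_integral_indicator) (simp add: A_def sets_upc)
    finally show ?thesis by simp
  qed
  ultimately show ?thesis unfolding eq by simp
qed

lemma measure_sigma_step: assumes "pvec p"
  shows "measure Om {\<omega>\<in>space Om. sigma_k (Q p \<omega>) (Suc k) < \<infinity>} \<le> rho0 * measure Om {\<omega>\<in>space Om. sigma_k (Q p \<omega>) k < \<infinity>}"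
proof -
  have "emeasure Om {\<omega>\<in>space Om. sigma_k (Q p \<omega>) (Suc k) < \<infinity>} = (SUP n. Pr p n (Suc k))"
    by (rule emeasure_sigma)
  also have "\<dots> \<le> (SUP n. ennreal rho0 * Pr p n k)"
    by (rule SUP_mono) (use L3[OF assms] in blast)
  also have "\<dots> = ennreal rho0 * (SUP n. Pr p n k)" by (rule SUP_mult_left_ennreal[symmetric])
  also have "\<dots> = ennreal rho0 * emeasure Om {\<omega>\<in>space Om. sigma_k (Q p \<omega>) k < \<infinity>}"
    by (subst emeasure_sigma) (rule refl)
  finally have "ennreal (measure Om {\<omega>\<in>space Om. sigma_k (Q p \<omega>) (Suc k) < \<infinity>})
      \<le> ennreal (rho0 * measure Om {\<omega>\<in>space Om. sigma_k (Q p \<omega>) k < \<infinity>})"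
    using rho0_ge by (simp add: finite_measure.emeasure_eq_measure[OF fm_Om] ennreal_mult)
  then show ?thesis using rho0_ge by (simp add: ennreal_le_iff)
qed

lemma part_a: assumes "pvec p"
  shows "\<exists>\<rho><1. measure Om {\<omega>\<in>space Om. sigma_k (Q p \<omega>) 1 < \<infinity>} < \<rho>
            \<and> (\<forall>k\<ge>2. measure Om {\<omega>\<in>space Om. sigma_k (Q p \<omega>) k < \<infinity>}
                     / measure Om {\<omega>\<in>space Om. sigma_k (Q p \<omega>) (k - 1) < \<infinity>} < \<rho>)"
proof (intro exI conjI allI impI)
  define \<rho> where "\<rho> = (1 + rho0) / 2"
  have r1: "rho0 < \<rho>" "\<rho> < 1" "0 < \<rho>" unfolding \<rho>_def using rho0_lt1 rho0_ge by auto
  show "(1 + rho0) / 2 < 1" using r1 unfolding \<rho>_def by simp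
  have "measure Om {\<omega>\<in>space Om. sigma_k (Q p \<omega>) (Suc 0) < \<infinity>} \<le> rho0 * measure Om {\<omega>\<in>space Om. sigma_k (Q p \<omega>) 0 < \<infinity>}"
    by (rule measure_sigma_step[OF assms])
  also have "\<dots> \<le> rho0 * 1" using rho0_ge prob_space.prob_le_1[OF prob_Om] by (intro mult_left_mono) auto
  finally show "measure Om {\<omega>\<in>space Om. sigma_k (Q p \<omega>) 1 < \<infinity>} < (1 + rho0) / 2"
    using r1 unfolding \<rho>_def by simp
  fix k :: nat assume k: "2 \<le> k"
  then obtain j where j: "k = Suc j" by (cases k) auto
  define m1 where "m1 = measure Om {\<omega>\<in>space Om. sigma_k (Q p \<omega>) k < \<infinity>}"
  define m0 where "m0 = measure Om {\<omega>\<in>space Om. sigma_k (Q p \<omega>) (k - 1) < \<infinity>}"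
  have step: "m1 \<le> rho0 * m0" unfolding m1_def m0_def j using measure_sigma_step[OF assms, of j] by simp
  have m0: "0 \<le> m0" unfolding m0_def by simp
  show "measure Om {\<omega>\<in>space Om. sigma_k (Q p \<omega>) k < \<infinity>} / measure Om {\<omega>\<in>space Om. sigma_k (Q p \<omega>) (k - 1) < \<infinity>} < (1 + rho0) / 2"
  proof (cases "m0 = 0")
    case True
    then show ?thesis using r1 unfolding m0_def \<rho>_def by simp
  next
    case False
    then have "0 < m0" using m0 by simp
    then have "m1 / m0 \<le> rho0" using step by (simp add: divide_le_eq mult.commute)
    then have "m1 / m0 < (1 + rho0) / 2" using r1 unfolding \<rho>_def by linarith
    then show ?thesis unfolding m1_def m0_def .
  qed
qed

lemma Q_nonneg: "pvec p \<Longrightarrow> 0 \<le> Q p \<omega> t"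
  unfolding Q_def using pvec_le1[OF pvec_samba[of p \<beta> \<omega> t]] beta by simp

lemma part_c: assumes "pvec p" shows "AE \<omega> in Om. (\<lambda>t. Q p \<omega> t) \<longlonglongrightarrow> 0"
proof -
  have "\<forall>n. AE \<omega> in Om. eventually (\<lambda>t. Q p \<omega> t < 1 / real (Suc (Suc n))) sequentially"
  proof
    fix n :: nat
    have "1 / real (Suc (Suc n)) \<le> 1/2" by (simp add: divide_le_eq)
    then show "AE \<omega> in Om. eventually (\<lambda>t. Q p \<omega> t < 1 / real (Suc (Suc n))) sequentially"
      by (intro AE_Q[OF assms]) auto
  qed
  then have "AE \<omega> in Om. \<forall>n. eventually (\<lambda>t. Q p \<omega> t < 1 / real (Suc (Suc n))) sequentially"
    by (simp add: AE_all_countable)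
  then show ?thesis
  proof (rule AE_mp, intro AE_I2 impI)
    fix \<omega> assume ev: "\<forall>n. eventually (\<lambda>t. Q p \<omega> t < 1 / real (Suc (Suc n))) sequentially"
    show "(\<lambda>t. Q p \<omega> t) \<longlonglongrightarrow> 0"
    proof (rule order_tendstoI)
      fix a :: real assume "a < 0"
      then show "eventually (\<lambda>t. a < Q p \<omega> t) sequentially"
        using Q_nonneg[OF assms] by (intro always_eventually) (metis le_less_trans not_le)
    next
      fix a :: real assume a: "0 < a"
      obtain n where n0: "0 < n" and n: "inverse (real n) < a" using ex_inverse_of_nat_less[OF a] by blast
      have "1 / real (Suc (Suc n)) \<le> inverse (real n)"
        using n0 by (simp add: inverse_eq_divide frac_le)
      then show "eventually (\<lambda>t. Q p \<omega> t < a) sequentially"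
        using ev[rule_format, of n] n by (elim eventually_mono) linarith
    qed
  qed
qed

end



theorem proposition15:
  fixes r :: "'a::{finite,linorder} \<Rightarrow> real"
    and astar :: 'a
    and p0 :: "'a \<Rightarrow> real"
    and \<beta> :: real
  assumes r_range: "\<And>a. 0 \<le> r a \<and> r a \<le> 1"
    and optimal: "\<And>a. a \<noteq> astar \<Longrightarrow> r a < r astar"
    and p0_pos: "\<And>a. p0 a > 0"
    and p0_sum: "(\<Sum>a\<in>UNIV. p0 a) = 1"
    and beta: "0 < \<beta>" "\<beta> \<le> 1"
  defines "\<Omega> \<equiv> noise_seq r"
    and "q \<equiv> (\<lambda>\<omega> t. 1 - samba (\<lambda>p. \<beta> / (1 - ln p)) p0 \<omega> t astar)"
  shows "(1 - p0 astar \<le> 1/2 \<longrightarrow>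
            (\<exists>\<rho><1. measure \<Omega> {\<omega>\<in>space \<Omega>. sigma_k (q \<omega>) 1 < \<infinity>} < \<rho>
                   \<and> (\<forall>k\<ge>2. measure \<Omega> {\<omega>\<in>space \<Omega>. sigma_k (q \<omega>) k < \<infinity>}
                              / measure \<Omega> {\<omega>\<in>space \<Omega>. sigma_k (q \<omega>) (k - 1) < \<infinity>} < \<rho>)))
       \<and> summable (\<lambda>t. measure \<Omega> {\<omega>\<in>space \<Omega>. q \<omega> t \<ge> 1/2})
       \<and> (AE \<omega> in \<Omega>. (\<lambda>t. q \<omega> t) \<longlonglongrightarrow> 0)"
proof -
  have "\<exists>D. 0 < D \<and> D \<le> 1 \<and> (\<forall>a. a \<noteq> astar \<longrightarrow> r a + D \<le> r astar)"
  proof (cases "UNIV - {astar} = {}")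
    case True
    then show ?thesis by (intro exI[of _ 1]) auto
  next
    case False
    define M where "M = Min ((\<lambda>a. r astar - r a) ` (UNIV - {astar}))"
    have fin: "finite ((\<lambda>a. r astar - r a) ` (UNIV - {astar}))" by simp
    have ne: "(\<lambda>a. r astar - r a) ` (UNIV - {astar}) \<noteq> {}" using False by simp
    have M0: "0 < M" unfolding M_def
      using optimal by (subst Min_gr_iff[OF fin ne]) auto
    have Mle: "M \<le> r astar - r a" if "a \<noteq> astar" for a
      unfolding M_def using fin that by (intro Min_le) auto
    show ?thesis
    proof (intro exI[of _ "min 1 M"] conjI allI impI)
      show "0 < min 1 M" using M0 by simp
      show "min 1 M \<le> 1" by simp
      fix a :: 'a assume "a \<noteq> astar"
      then show "r a + min 1 M \<le> r astar" using Mle[of a] by linarith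
    qed
  qed
  then obtain D where D: "0 < D" "D \<le> 1" "\<And>a. a \<noteq> astar \<Longrightarrow> r a + D \<le> r astar" by blast
  interpret sl r astar \<beta> D
    by unfold_locales (use r_range D beta in auto)
  have aleq: "(\<lambda>p. \<beta> / (1 - ln p)) = al \<beta>" by (simp add: al_def[abs_def])
  have qQ: "q = Q p0" unfolding q_def Q_def aleq by (simp add: fun_eq_iff)
  have pv: "pvec p0" unfolding pvec_def using p0_pos p0_sum by simp
  have Om: "\<Omega> = Om" unfolding \<Omega>_def ..
  have b: "summable (\<lambda>t. measure \<Omega> {\<omega>\<in>space \<Omega>. q \<omega> t \<ge> 1/2})"
    unfolding qQ Om using summable_Q[OF pv, of "1/2"] by simp
  show ?thesis
    unfolding qQ Om using part_a[OF pv] b[unfolded qQ Om] part_c[OF pv] by blast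
qed


end
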